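(* Let $V$ be a Hausdorff, sequentially complete locally convex space whose topology is induced by a family $\mathcal P$ of seminorms, let $\Omega\subset\mathbb R^m$ be open and $k\in(0,\infty)\setminus\mathbb N$. A function $f\colon\Omega\to V$ belongs to $C^k(\Omega,V)$ if and only if for each $p\in\mathcal P$ there is $C\in(0,\infty)$ such that for every continuous linear form $l\in V'$ one has $l\circ f\in C^k(\Omega,\mathbb R)$ and $|l\circ f|_k\le C\,p^*(l)$.
   Context: $V'$ denotes the space of continuous linear forms $V\to\mathbb R$; for $l\in V'$, $p\in\mathcal P$, $p^*(l)=\sup\{l(v)\colon v\in V,\ p(v)\le1\}\le\infty$. For $k\in(0,\infty)\setminus\mathbb N$ write $[k]$ for its integer part and $\{k\}=k-[k]$. A function $f\colon\Omega\to V$ is in $C^k(\Omega,V)$ if it is bounded, has partial derivatives of all orders $\le[k]$, and every such partial $g=\partial^\alpha f$, $|\alpha|\le[k]$, satisfies $\tilde p_{\{k\}}(g)=\sup\{p(g(s)-g(t))/|s-t|^{\{k\}}\colon s,t\in\Omega,\ s\ne t\}<\infty$ for all $p\in\mathcal P$. For $p\in\mathcal P$ put $p_k(f)=\max\{\sup_\Omega p(f),\ \tilde p_{\{k\}}(\partial^\alpha f)\colon|\alpha|\le[k]\}$; when $V=\mathbb R$, $p=|\cdot|$, this is written $|\cdot|_k$ (the usual Hölder norm). *)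

theory Defs
  imports "HOL-Analysis.Analysis"
begin

definition seminorm :: "('v::real_vector \<Rightarrow> real) \<Rightarrow> bool" where
  "seminorm p \<longleftrightarrow> (\<forall>x y. p (x + y) \<le> p x + p y) \<and> (\<forall>c x. p (c *\<^sub>R x) = \<bar>c\<bar> * p x)"

definition seminorm_topology :: "('v::real_vector \<Rightarrow> real) set \<Rightarrow> 'v topology" where
  "seminorm_topology P = topology (\<lambda>U. \<forall>x\<in>U. \<exists>F r. finite F \<and> F \<subseteq> P \<and> r > 0 \<and>
      {y. \<forall>p\<in>F. p (y - x) < r} \<subseteq> U)"

definition seq_complete :: "('v::real_vector \<Rightarrow> real) set \<Rightarrow> bool" where
  "seq_complete P \<longleftrightarrow> (\<forall>x :: nat \<Rightarrow> 'v.
     (\<forall>p\<in>P. \<forall>e>0. \<exists>N. \<forall>m\<ge>N. \<forall>n\<ge>N. p (x m - x n) < e) \<longrightarrow>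
     (\<exists>y. limitin (seminorm_topology P) x y sequentially))"

definition cont_linear_form :: "('v::real_vector \<Rightarrow> real) set \<Rightarrow> ('v \<Rightarrow> real) \<Rightarrow> bool" where
  "cont_linear_form P l \<longleftrightarrow> linear l \<and> continuous_map (seminorm_topology P) euclideanreal l"

definition dual_seminorm :: "('v::real_vector \<Rightarrow> real) \<Rightarrow> ('v \<Rightarrow> real) \<Rightarrow> ereal" where
  "dual_seminorm p l = (SUP v\<in>{v. p v \<le> 1}. ereal (l v))"

definition diff_quot :: "(real^'m \<Rightarrow> 'v::real_vector) \<Rightarrow> 'm \<Rightarrow> real^'m \<Rightarrow> real \<Rightarrow> 'v" where
  "diff_quot g i x h = (1 / h) *\<^sub>R (g (x + h *\<^sub>R axis i 1) - g x)"

definition has_partial_at ::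
  "('v::real_vector \<Rightarrow> real) set \<Rightarrow> (real^'m \<Rightarrow> 'v) \<Rightarrow> 'm \<Rightarrow> real^'m \<Rightarrow> bool" where
  "has_partial_at P g i x \<longleftrightarrow> (\<exists>y. limitin (seminorm_topology P) (diff_quot g i x) y (at 0))"

definition partial ::
  "('v::real_vector \<Rightarrow> real) set \<Rightarrow> 'm \<Rightarrow> (real^'m \<Rightarrow> 'v) \<Rightarrow> real^'m \<Rightarrow> 'v" where
  "partial P i g x = (THE y. limitin (seminorm_topology P) (diff_quot g i x) y (at 0))"

text \<open>Iterated partial derivative along a list of coordinate directions
  (the last element of the list is differentiated first).\<close>
fun iter_partial ::
  "('v::real_vector \<Rightarrow> real) set \<Rightarrow> 'm list \<Rightarrow> (real^'m \<Rightarrow> 'v) \<Rightarrow> real^'m \<Rightarrow> 'v" where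
  "iter_partial P [] g = g"
| "iter_partial P (i # is) g = partial P i (iter_partial P is g)"

fun partials_exist ::
  "('v::real_vector \<Rightarrow> real) set \<Rightarrow> (real^'m) set \<Rightarrow> 'm list \<Rightarrow> (real^'m \<Rightarrow> 'v) \<Rightarrow> bool" where
  "partials_exist P \<Omega> [] g = True"
| "partials_exist P \<Omega> (i # is) g \<longleftrightarrow> partials_exist P \<Omega> is g \<and>
      (\<forall>x\<in>\<Omega>. has_partial_at P (iter_partial P is g) i x)"

definition intpart :: "real \<Rightarrow> nat" where "intpart k = nat \<lfloor>k\<rfloor>"
definition fracpart :: "real \<Rightarrow> real" where "fracpart k = k - of_int \<lfloor>k\<rfloor>"

definition Ck :: "('v::real_vector \<Rightarrow> real) set \<Rightarrow> real \<Rightarrow> (real^'m) set \<Rightarrow> (real^'m \<Rightarrow> 'v) \<Rightarrow> bool" where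
  "Ck P k \<Omega> f \<longleftrightarrow>
     (\<forall>p\<in>P. \<exists>B. \<forall>x\<in>\<Omega>. p (f x) \<le> B) \<and>
     (\<forall>is. length is \<le> intpart k \<longrightarrow>
        partials_exist P \<Omega> is f \<and>
        (\<forall>p\<in>P. \<exists>B. \<forall>s\<in>\<Omega>. \<forall>t\<in>\<Omega>. s \<noteq> t \<longrightarrow>
            p (iter_partial P is f s - iter_partial P is f t) / dist s t powr fracpart k \<le> B))"

definition supnn :: "real set \<Rightarrow> real" where "supnn S = Sup (insert 0 S)"

definition hoelder_semi :: "('v::real_vector \<Rightarrow> real) \<Rightarrow> real \<Rightarrow> (real^'m) set \<Rightarrow> (real^'m \<Rightarrow> 'v) \<Rightarrow> real" where
  "hoelder_semi p a \<Omega> g = supnn {p (g s - g t) / dist s t powr a | s t. s \<in> \<Omega> \<and> t \<in> \<Omega> \<and> s \<noteq> t}"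

text \<open>p_k(f); for V = R, P = {abs}, p = abs this is the Hoelder norm |f|_k.\<close>
definition Ck_norm :: "('v::real_vector \<Rightarrow> real) set \<Rightarrow> ('v \<Rightarrow> real) \<Rightarrow> real \<Rightarrow> (real^'m) set \<Rightarrow> (real^'m \<Rightarrow> 'v) \<Rightarrow> real" where
  "Ck_norm P p k \<Omega> f = supnn (insert (supnn ((\<lambda>x. p (f x)) ` \<Omega>))
      {hoelder_semi p (fracpart k) \<Omega> (iter_partial P is f) | is. length is \<le> intpart k})"

end

theory Submission
  imports Defs
begin


section \<open>Seminorm basics\<close>

lemma sn_zero: assumes "seminorm p" shows "p 0 = 0"
  using assms unfolding seminorm_def by (metis abs_0 mult_zero_left scaleR_zero_left)

lemma sn_neg: assumes "seminorm p" shows "p (- x) = p x"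
  using assms unfolding seminorm_def by (metis abs_minus_cancel abs_one mult_1 scaleR_minus1_left)

lemma sn_nonneg: assumes "seminorm p" shows "p x \<ge> 0"
proof -
  have "p (x + - x) \<le> p x + p (- x)" using assms unfolding seminorm_def by blast
  then show ?thesis using sn_zero[OF assms] sn_neg[OF assms, of x] by simp
qed

lemma sn_add: assumes "seminorm p" shows "p (x + y) \<le> p x + p y"
  using assms unfolding seminorm_def by blast

lemma sn_scale: assumes "seminorm p" shows "p (c *\<^sub>R x) = \<bar>c\<bar> * p x"
  using assms unfolding seminorm_def by blast

lemma sn_diff_commute: assumes "seminorm p" shows "p (x - y) = p (y - x)"
  using sn_neg[OF assms, of "x - y"] by simp

lemma sn_diff_tri: assumes "seminorm p" shows "p (x - z) \<le> p (x - y) + p (y - z)"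
  using sn_add[OF assms, of "x - y" "y - z"] by simp

section \<open>The seminorm topology\<close>

lemma istopology_sn:
  fixes P :: "('a::real_vector \<Rightarrow> real) set"
  shows "istopology (\<lambda>U. \<forall>x\<in>U. \<exists>F r. finite F \<and> F \<subseteq> P \<and> r > 0 \<and>
      {y. \<forall>p\<in>F. p (y - x) < r} \<subseteq> U)"
  unfolding istopology_def
proof (intro conjI allI impI)
  fix S T :: "'a set"
  assume S: "\<forall>x\<in>S. \<exists>F r. finite F \<and> F \<subseteq> P \<and> r > 0 \<and> {y. \<forall>p\<in>F. p (y - x) < r} \<subseteq> S"
    and T: "\<forall>x\<in>T. \<exists>F r. finite F \<and> F \<subseteq> P \<and> r > 0 \<and> {y. \<forall>p\<in>F. p (y - x) < r} \<subseteq> T"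
  show "\<forall>x\<in>S \<inter> T. \<exists>F r. finite F \<and> F \<subseteq> P \<and> r > 0 \<and> {y. \<forall>p\<in>F. p (y - x) < r} \<subseteq> S \<inter> T"
  proof
    fix x assume "x \<in> S \<inter> T"
    then have "x \<in> S" "x \<in> T" by auto
    obtain F1 r1 where 1: "finite F1" "F1 \<subseteq> P" "r1 > 0" "{y. \<forall>p\<in>F1. p (y - x) < r1} \<subseteq> S"
      using S \<open>x \<in> S\<close> by (elim ballE exE conjE) auto
    obtain F2 r2 where 2: "finite F2" "F2 \<subseteq> P" "r2 > 0" "{y. \<forall>p\<in>F2. p (y - x) < r2} \<subseteq> T"
      using T \<open>x \<in> T\<close> by (elim ballE exE conjE) auto
    have "{y. \<forall>p\<in>F1 \<union> F2. p (y - x) < min r1 r2} \<subseteq> S \<inter> T"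
    proof
      fix y assume "y \<in> {y. \<forall>p\<in>F1 \<union> F2. p (y - x) < min r1 r2}"
      then have "\<forall>p\<in>F1. p (y - x) < r1" "\<forall>p\<in>F2. p (y - x) < r2" by auto
      then show "y \<in> S \<inter> T" using 1(4) 2(4) by (simp add: subset_iff)
    qed
    moreover have "finite (F1 \<union> F2)" "F1 \<union> F2 \<subseteq> P" "min r1 r2 > 0" using 1 2 by auto
    ultimately show "\<exists>F r. finite F \<and> F \<subseteq> P \<and> r > 0 \<and> {y. \<forall>p\<in>F. p (y - x) < r} \<subseteq> S \<inter> T"
      by (intro exI[of _ "F1 \<union> F2"] exI[of _ "min r1 r2"] conjI)
  qed
next
  fix K :: "'a set set"
  assume K: "\<forall>S\<in>K. \<forall>x\<in>S. \<exists>F r. finite F \<and> F \<subseteq> P \<and> r > 0 \<and> {y. \<forall>p\<in>F. p (y - x) < r} \<subseteq> S"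
  show "\<forall>x\<in>\<Union> K. \<exists>F r. finite F \<and> F \<subseteq> P \<and> r > 0 \<and> {y. \<forall>p\<in>F. p (y - x) < r} \<subseteq> \<Union> K"
  proof
    fix x assume "x \<in> \<Union> K"
    then obtain S where S: "S \<in> K" "x \<in> S" by (elim UnionE)
    then obtain F r where FR: "finite F" "F \<subseteq> P" "r > 0" "{y. \<forall>p\<in>F. p (y - x) < r} \<subseteq> S"
      using K by (elim ballE exE conjE) auto
    have "S \<subseteq> \<Union> K" using S(1) by (rule Union_upper)
    then have "{y. \<forall>p\<in>F. p (y - x) < r} \<subseteq> \<Union> K" using FR(4) by (rule order_trans[rotated])
    then show "\<exists>F r. finite F \<and> F \<subseteq> P \<and> r > 0 \<and> {y. \<forall>p\<in>F. p (y - x) < r} \<subseteq> \<Union> K"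
      using FR(1-3) by (intro exI[of _ F] exI[of _ r] conjI)
  qed
qed

lemma openin_sn:
  assumes "\<forall>p\<in>P. seminorm p"
  shows "openin (seminorm_topology P) U \<longleftrightarrow> (\<forall>x\<in>U. \<exists>F r. finite F \<and> F \<subseteq> P \<and> r > 0 \<and>
      {y. \<forall>p\<in>F. p (y - x) < r} \<subseteq> U)"
proof -
  have "openin (seminorm_topology P) = (\<lambda>U. \<forall>x\<in>U. \<exists>F r. finite F \<and> F \<subseteq> P \<and> r > 0 \<and>
      {y. \<forall>p\<in>F. p (y - x) < r} \<subseteq> U)"
    unfolding seminorm_topology_def by (rule topology_inverse'[OF istopology_sn])
  then show ?thesis by simp
qed

lemma topspace_sn:
  assumes "\<forall>p\<in>P. seminorm p"
  shows "topspace (seminorm_topology P) = UNIV"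
proof -
  have "openin (seminorm_topology P) UNIV" unfolding openin_sn[OF assms]
    by (intro ballI exI[of _ "{}"] exI[of _ 1]) auto
  then have "UNIV \<subseteq> topspace (seminorm_topology P)" by (rule openin_subset)
  then show ?thesis by auto
qed

lemma open_ball_sn:
  assumes "\<forall>p\<in>P. seminorm p" "p \<in> P"
  shows "openin (seminorm_topology P) {z. p (z - y) < e}"
  unfolding openin_sn[OF assms(1)]
proof
  fix x assume x: "x \<in> {z. p (z - y) < e}"
  have sp: "seminorm p" using assms by blast
  show "\<exists>F r. finite F \<and> F \<subseteq> P \<and> r > 0 \<and> {z. \<forall>q\<in>F. q (z - x) < r} \<subseteq> {z. p (z - y) < e}"
  proof (intro exI[of _ "{p}"] exI[of _ "e - p (x - y)"] conjI)
    show "{z. \<forall>q\<in>{p}. q (z - x) < e - p (x - y)} \<subseteq> {z. p (z - y) < e}"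
    proof
      fix z assume "z \<in> {z. \<forall>q\<in>{p}. q (z - x) < e - p (x - y)}"
      then have "p (z - x) < e - p (x - y)" by simp
      then show "z \<in> {z. p (z - y) < e}" using sn_diff_tri[OF sp, of z y x] by simp
    qed
  qed (use x assms in auto)
qed

lemma limitin_sn:
  assumes "\<forall>p\<in>P. seminorm p"
  shows "limitin (seminorm_topology P) g y F \<longleftrightarrow>
    (\<forall>p\<in>P. \<forall>e>0. eventually (\<lambda>x. p (g x - y) < e) F)"
proof
  assume L: "limitin (seminorm_topology P) g y F"
  show "\<forall>p\<in>P. \<forall>e>0. eventually (\<lambda>x. p (g x - y) < e) F"
  proof (intro ballI allI impI)
    fix p e assume "p \<in> P" "(e::real) > 0"
    moreover have "seminorm p" using assms \<open>p \<in> P\<close> by blast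
    ultimately have "openin (seminorm_topology P) {z. p (z - y) < e}" "y \<in> {z. p (z - y) < e}"
      using open_ball_sn[OF assms \<open>p \<in> P\<close>] sn_zero[OF \<open>seminorm p\<close>] \<open>e > 0\<close> by auto
    then show "eventually (\<lambda>x. p (g x - y) < e) F" using limitinD[OF L] by fastforce
  qed
next
  assume R: "\<forall>p\<in>P. \<forall>e>0. eventually (\<lambda>x. p (g x - y) < e) F"
  show "limitin (seminorm_topology P) g y F"
    unfolding limitin_def topspace_sn[OF assms]
  proof (intro conjI allI impI UNIV_I)
    fix U assume U: "openin (seminorm_topology P) U \<and> y \<in> U"
    then obtain G r where G: "finite G" "G \<subseteq> P" "r > 0" "{z. \<forall>p\<in>G. p (z - y) < r} \<subseteq> U"
      unfolding openin_sn[OF assms] by blast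
    have "eventually (\<lambda>x. \<forall>p\<in>G. p (g x - y) < r) F"
      using G(1,2,3) R by (simp add: eventually_ball_finite subset_iff)
    then show "eventually (\<lambda>x. g x \<in> U) F"
      by (rule eventually_mono) (use G(4) in blast)
  qed
qed

lemma sn_abs_topology: "seminorm_topology {abs :: real \<Rightarrow> real} = euclideanreal"
proof -
  have sa: "\<forall>p\<in>{abs :: real \<Rightarrow> real}. seminorm p" by (auto simp: seminorm_def abs_triangle_ineq abs_mult)
  show ?thesis
  proof (rule topology_eq[THEN iffD2], intro allI)
    fix U :: "real set"
    show "openin (seminorm_topology {abs}) U = openin euclidean U"
      unfolding openin_sn[OF sa] open_openin[symmetric] open_dist
    proof safe
      fix x assume A: "\<forall>x\<in>U. \<exists>F r. finite F \<and> F \<subseteq> {abs} \<and> r > 0 \<and> {y. \<forall>p\<in>F. p (y - x) < r} \<subseteq> U"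
        and x: "x \<in> U"
      then obtain F r where "F \<subseteq> {abs}" "r > 0" "{y. \<forall>p\<in>F. p (y - x) < r} \<subseteq> U" by blast
      then have "\<forall>y. dist y x < r \<longrightarrow> y \<in> U" by (auto simp: dist_real_def)
      then show "\<exists>e>0. \<forall>y. dist y x < e \<longrightarrow> y \<in> U" using \<open>r > 0\<close> by blast
    next
      fix x assume A: "\<forall>x\<in>U. \<exists>e>0. \<forall>y. dist y x < e \<longrightarrow> y \<in> U" and x: "x \<in> U"
      then obtain e where "e > 0" "\<forall>y. dist y x < e \<longrightarrow> y \<in> U" by blast
      then show "\<exists>F r. finite F \<and> F \<subseteq> {abs} \<and> r > 0 \<and> {y. \<forall>p\<in>F. p (y - x) < r} \<subseteq> U"
        by (intro exI[of _ "{abs}"] exI[of _ e]) (auto simp: dist_real_def)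
    qed
  qed
qed

lemma seminorm_abs: "\<forall>p\<in>{abs :: real \<Rightarrow> real}. seminorm p"
  by (auto simp: seminorm_def abs_triangle_ineq abs_mult)



lemma cont_bound:
  assumes sn: "\<forall>p\<in>P. seminorm p" and cl: "cont_linear_form P l"
  shows "\<exists>F c. finite F \<and> F \<subseteq> P \<and> c \<ge> 0 \<and> (\<forall>v. \<bar>l v\<bar> \<le> c * (\<Sum>p\<in>F. p v))"
proof -
  have lin: "linear l" and cm: "continuous_map (seminorm_topology P) euclideanreal l"
    using cl unfolding cont_linear_form_def by auto
  have "openin (seminorm_topology P) {x \<in> topspace (seminorm_topology P). l x \<in> {-1<..<1}}"
    by (rule openin_continuous_map_preimage[OF cm]) simp
  then have op: "openin (seminorm_topology P) {x. \<bar>l x\<bar> < 1}"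
    unfolding topspace_sn[OF sn] by (simp add: abs_less_iff conj_commute)
  have "0 \<in> {x. \<bar>l x\<bar> < 1}" using linear_0[OF lin] by simp
  with op have "\<exists>F r. finite F \<and> F \<subseteq> P \<and> r > 0 \<and> {y. \<forall>p\<in>F. p (y - 0) < r} \<subseteq> {x. \<bar>l x\<bar> < 1}"
    unfolding openin_sn[OF sn] by (rule bspec)
  then obtain F r where F: "finite F" "F \<subseteq> P" "r > 0" and sub: "{y. \<forall>p\<in>F. p (y - 0) < r} \<subseteq> {x. \<bar>l x\<bar> < 1}"
    by auto
  have snF: "\<And>p. p \<in> F \<Longrightarrow> seminorm p" using F(2) sn by (auto simp: subset_iff)
  have key: "\<bar>l v\<bar> \<le> (2 / r) * (\<Sum>p\<in>F. p v)" for v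
  proof -
    define s where "s = (\<Sum>p\<in>F. p v)"
    have pnn: "\<And>p. p \<in> F \<Longrightarrow> p v \<ge> 0" using snF sn_nonneg by blast
    then have s0: "s \<ge> 0" unfolding s_def by (simp add: sum_nonneg)
    show ?thesis
    proof (cases "s > 0")
      case True
      define y where "y = (r / (2 * s)) *\<^sub>R v"
      have "\<forall>p\<in>F. p (y - 0) < r"
      proof
        fix p assume "p \<in> F"
        have "p v \<le> s" unfolding s_def using member_le_sum[OF \<open>p \<in> F\<close>, of "\<lambda>p. p v"] pnn F(1) by simp
        have "p (y - 0) = (r / (2 * s)) * p v"
          unfolding y_def using sn_scale[OF snF[OF \<open>p \<in> F\<close>]] True F(3) by simp
        also have "\<dots> \<le> (r / (2 * s)) * s" using \<open>p v \<le> s\<close> True F(3) by (intro mult_left_mono) auto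
        also have "\<dots> = r / 2" using True by simp
        also have "\<dots> < r" using F(3) by simp
        finally show "p (y - 0) < r" .
      qed
      then have "\<bar>l y\<bar> < 1" using subsetD[OF sub, of y] by simp
      moreover have "l y = (r / (2 * s)) * l v" unfolding y_def using linear_scale[OF lin] by simp
      ultimately have "(r / (2 * s)) * \<bar>l v\<bar> < 1" using True F(3) by (simp add: abs_mult)
      then have "r * \<bar>l v\<bar> < 2 * s" using True by (simp add: field_simps)
      then show ?thesis unfolding s_def[symmetric] using F(3) by (simp add: field_simps)
    next
      case False
      then have "s = 0" using s0 by simp
      then have z: "\<forall>p\<in>F. p v = 0" unfolding s_def using sum_nonneg_eq_0_iff[OF F(1), of "\<lambda>p. p v"] pnn by simp
      have "l v = 0"
      proof (rule ccontr)
        assume ne: "l v \<noteq> 0"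
        define y where "y = (1 / \<bar>l v\<bar>) *\<^sub>R v"
        have "\<forall>p\<in>F. p (y - 0) < r"
        proof
          fix p assume "p \<in> F"
          then show "p (y - 0) < r" using z[rule_format, OF \<open>p \<in> F\<close>] sn_scale[OF snF[OF \<open>p \<in> F\<close>]] F(3) unfolding y_def by simp
        qed
        then have "\<bar>l y\<bar> < 1" using subsetD[OF sub, of y] by simp
        moreover have "l y = (1 / \<bar>l v\<bar>) * l v" unfolding y_def using linear_scale[OF lin] by simp
        ultimately show False using ne by (simp add: abs_mult)
      qed
      then show ?thesis using s0 F(3) unfolding s_def by simp
    qed
  qed
  show ?thesis using F key \<open>r > 0\<close> by (intro exI[of _ F] exI[of _ "2 / r"]) auto
qed

lemma cont_from_bound:
  assumes sn: "\<forall>p\<in>P. seminorm p" and lin: "linear l" and pP: "p \<in> P"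
    and bd: "\<And>v. \<bar>l v\<bar> \<le> c * p v"
  shows "cont_linear_form P l"
  unfolding cont_linear_form_def continuous_map_def topspace_sn[OF sn]
proof (intro conjI allI impI lin)
  show "l \<in> UNIV \<rightarrow> topspace euclideanreal" by simp
  fix U :: "real set" assume "openin euclideanreal U"
  then have oU: "open U" by simp
  show "openin (seminorm_topology P) {x \<in> UNIV. l x \<in> U}"
    unfolding openin_sn[OF sn]
  proof
    fix x assume "x \<in> {x \<in> UNIV. l x \<in> U}"
    then have "\<exists>e>0. ball (l x) e \<subseteq> U" using open_contains_ball_eq[OF oU] by simp
    then obtain e where e: "e > 0" "ball (l x) e \<subseteq> U" by auto
    define c' where "c' = max c 0 + 1"
    have c': "c' > 0" "c \<le> c'" unfolding c'_def by auto
    have spp: "seminorm p" using sn pP by simp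
    have "{y. \<forall>q\<in>{p}. q (y - x) < e / c'} \<subseteq> {x \<in> UNIV. l x \<in> U}"
    proof
      fix y assume "y \<in> {y. \<forall>q\<in>{p}. q (y - x) < e / c'}"
      then have py: "p (y - x) < e / c'" by simp
      have "\<bar>l y - l x\<bar> = \<bar>l (y - x)\<bar>" using linear_diff[OF lin] by simp
      also have "\<dots> \<le> c * p (y - x)" by (rule bd)
      also have "\<dots> \<le> c' * p (y - x)" using c' sn_nonneg[OF spp] by (intro mult_right_mono) auto
      also have "\<dots> < c' * (e / c')" using py c' by (intro mult_strict_left_mono) auto
      also have "\<dots> = e" using c' by simp
      finally have "dist (l x) (l y) < e" by (simp add: dist_real_def abs_minus_commute)
      then have "l y \<in> ball (l x) e" by simp
      then show "y \<in> {x \<in> UNIV. l x \<in> U}" using e(2) by auto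
    qed
    then show "\<exists>F r. finite F \<and> F \<subseteq> P \<and> r > 0 \<and> {y. \<forall>p\<in>F. p (y - x) < r} \<subseteq> {x \<in> UNIV. l x \<in> U}"
      using pP e c' by (intro exI[of _ "{p}"] exI[of _ "e / c'"]) auto
  qed
qed

lemma dual_nonneg:
  assumes "seminorm p" "linear l"
  shows "dual_seminorm p l \<ge> 0"
proof -
  have "0 \<in> {v. p v \<le> 1}" using sn_zero[OF assms(1)] by simp
  then have "ereal (l 0) \<le> dual_seminorm p l" unfolding dual_seminorm_def by (rule SUP_upper)
  then show ?thesis using linear_0[OF assms(2)] by (simp add: zero_ereal_def)
qed

lemma dual_le1:
  assumes "\<And>v. l v \<le> p v"
  shows "dual_seminorm p l \<le> 1"
  unfolding dual_seminorm_def
proof (rule SUP_least)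
  fix v assume "v \<in> {v. p v \<le> 1}"
  then show "ereal (l v) \<le> 1" using assms[of v] by (simp add: one_ereal_def)
qed

lemma dual_finite:
  assumes sp: "seminorm p" and lin: "linear l" and fin: "dual_seminorm p l \<noteq> \<infinity>"
  shows "\<exists>d\<ge>0. dual_seminorm p l = ereal d \<and> (\<forall>v. \<bar>l v\<bar> \<le> d * p v)"
proof -
  have nn: "dual_seminorm p l \<ge> 0" by (rule dual_nonneg[OF sp lin])
  then obtain d where d: "dual_seminorm p l = ereal d" using fin
    by (cases "dual_seminorm p l") simp_all
  have d0: "d \<ge> 0" using nn d by (simp add: zero_ereal_def)
  have le: "l w \<le> d" if "p w \<le> 1" for w
  proof -
    have "ereal (l w) \<le> dual_seminorm p l" unfolding dual_seminorm_def
      by (rule SUP_upper) (use that in simp)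
    then show ?thesis using d by simp
  qed
  have "\<bar>l v\<bar> \<le> d * p v" for v
  proof (cases "p v > 0")
    case True
    define w where "w = (1 / p v) *\<^sub>R v"
    have pw1: "p w = 1" unfolding w_def sn_scale[OF sp] using True by simp
    have pw2: "p (- w) = 1" using pw1 sn_neg[OF sp] by simp
    have lw1: "l w = l v / p v" unfolding w_def linear_scale[OF lin] by simp
    have lw2: "l (- w) = - (l v / p v)" using lw1 linear_neg[OF lin] by simp
    have "l v / p v \<le> d" using le[of w] pw1 lw1 by simp
    moreover have "- (l v / p v) \<le> d" using le[of "- w"] pw2 lw2 by simp
    ultimately have a: "\<bar>l v / p v\<bar> \<le> d" by (simp add: abs_le_iff)
    have "\<bar>l v\<bar> = \<bar>l v / p v\<bar> * p v" using True by (simp add: abs_divide)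
    also have "\<dots> \<le> d * p v" using a True by (intro mult_right_mono) auto
    finally show ?thesis .
  next
    case False
    then have pv0: "p v = 0" using sn_nonneg[OF sp, of v] by simp
    have "l v = 0"
    proof (rule ccontr)
      assume ne: "l v \<noteq> 0"
      define t where "t = (d + 1) / l v"
      have "p (t *\<^sub>R v) \<le> 1" using sn_scale[OF sp] pv0 by simp
      then have "l (t *\<^sub>R v) \<le> d" by (rule le)
      moreover have "l (t *\<^sub>R v) = d + 1" unfolding t_def using linear_scale[OF lin] ne by simp
      ultimately show False by simp
    qed
    then show ?thesis using pv0 by simp
  qed
  then show ?thesis using d d0 by auto
qed



definition sublin :: "('a::real_vector \<Rightarrow> real) \<Rightarrow> bool" where
  "sublin q \<longleftrightarrow> (\<forall>x y. q (x + y) \<le> q x + q y) \<and> (\<forall>c>0. \<forall>x. q (c *\<^sub>R x) = c * q x)"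

lemma sublin_add: "sublin q \<Longrightarrow> q (x + y) \<le> q x + q y"
  unfolding sublin_def by blast

lemma sublin_hom: "sublin q \<Longrightarrow> c > 0 \<Longrightarrow> q (c *\<^sub>R x) = c * q x"
  unfolding sublin_def by blast

lemma sublin_zero: assumes "sublin q" shows "q 0 = 0"
  using sublin_hom[OF assms, of 2 0] by simp

lemma sublin_hom0: assumes "sublin q" "c \<ge> 0" shows "q (c *\<^sub>R x) = c * q x"
proof (cases "c = 0")
  case True then show ?thesis using sublin_zero[OF assms(1)] by simp
next
  case False then show ?thesis using sublin_hom[OF assms(1)] assms(2) by simp
qed

lemma sublin_neg_ge: assumes "sublin q" shows "- q (- x) \<le> q x"
  using sublin_add[OF assms, of x "- x"] sublin_zero[OF assms] by simp

lemma seminorm_sublin: "seminorm p \<Longrightarrow> sublin p"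
  unfolding sublin_def using sn_add sn_scale by fastforce

definition hbop :: "('a::real_vector \<Rightarrow> real) \<Rightarrow> 'a \<Rightarrow> 'a \<Rightarrow> real" where
  "hbop q a x = Inf ((\<lambda>t. q (x + t *\<^sub>R a) - t * q a) ` {0..})"

lemma hbop_bdd:
  assumes "sublin q"
  shows "bdd_below ((\<lambda>t. q (x + t *\<^sub>R a) - t * q a) ` {0..})"
proof (rule bdd_belowI2)
  fix t :: real assume "t \<in> {0..}"
  then have "q (t *\<^sub>R a) = t * q a" using sublin_hom0[OF assms] by simp
  moreover have "q (t *\<^sub>R a) \<le> q (x + t *\<^sub>R a) + q (- x)"
    using sublin_add[OF assms, of "x + t *\<^sub>R a" "- x"] by simp
  ultimately show "- q (- x) \<le> q (x + t *\<^sub>R a) - t * q a" by simp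
qed

lemma hbop_le:
  assumes "sublin q" "t \<ge> 0"
  shows "hbop q a x \<le> q (x + t *\<^sub>R a) - t * q a"
  unfolding hbop_def by (rule cInf_lower[OF _ hbop_bdd[OF assms(1)]]) (use assms(2) in simp)

lemma hbop_ge:
  assumes "\<And>t. t \<ge> 0 \<Longrightarrow> m \<le> q (x + t *\<^sub>R a) - t * q a"
  shows "m \<le> hbop q a x"
  unfolding hbop_def by (rule cInf_greatest) (use assms in auto)

lemma hbop_le_self: "sublin q \<Longrightarrow> hbop q a x \<le> q x"
  using hbop_le[of q 0 a x] by simp

lemma hbop_neg: "sublin q \<Longrightarrow> hbop q a (- a) \<le> - q a"
  using hbop_le[of q 1 a "- a"] sublin_zero[of q] by simp

lemma hbop_sublin:
  assumes sq: "sublin q"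
  shows "sublin (hbop q a)"
  unfolding sublin_def
proof (intro conjI allI impI)
  fix x y
  have A: "hbop q a (x + y) - (q (y + t *\<^sub>R a) - t * q a) \<le> q (x + s *\<^sub>R a) - s * q a"
    if "s \<ge> 0" "t \<ge> 0" for s t
  proof -
    have "hbop q a (x + y) \<le> q ((x + y) + (s + t) *\<^sub>R a) - (s + t) * q a"
      using hbop_le[OF sq] that by simp
    also have "(x + y) + (s + t) *\<^sub>R a = (x + s *\<^sub>R a) + (y + t *\<^sub>R a)"
      by (simp add: algebra_simps)
    also have "q \<dots> \<le> q (x + s *\<^sub>R a) + q (y + t *\<^sub>R a)" by (rule sublin_add[OF sq])
    finally show ?thesis by (simp add: algebra_simps)
  qed
  have B: "hbop q a (x + y) - hbop q a x \<le> q (y + t *\<^sub>R a) - t * q a" if "t \<ge> 0" for t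
  proof -
    have "hbop q a (x + y) - (q (y + t *\<^sub>R a) - t * q a) \<le> hbop q a x"
      by (rule hbop_ge) (use A that in blast)
    then show ?thesis by simp
  qed
  have "hbop q a (x + y) - hbop q a x \<le> hbop q a y"
    by (rule hbop_ge) (use B in blast)
  then show "hbop q a (x + y) \<le> hbop q a x + hbop q a y" by simp
next
  fix c :: real and x assume c: "c > 0"
  have 1: "hbop q a (c *\<^sub>R x) / c \<le> hbop q a x"
  proof (rule hbop_ge)
    fix t :: real assume t: "t \<ge> 0"
    have "hbop q a (c *\<^sub>R x) \<le> q (c *\<^sub>R x + (c * t) *\<^sub>R a) - (c * t) * q a"
      using hbop_le[OF sq] t c by simp
    also have "c *\<^sub>R x + (c * t) *\<^sub>R a = c *\<^sub>R (x + t *\<^sub>R a)" by (simp add: algebra_simps)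
    also have "q (c *\<^sub>R (x + t *\<^sub>R a)) = c * q (x + t *\<^sub>R a)" by (rule sublin_hom[OF sq c])
    finally have "hbop q a (c *\<^sub>R x) \<le> c * (q (x + t *\<^sub>R a) - t * q a)" by (simp add: algebra_simps)
    then show "hbop q a (c *\<^sub>R x) / c \<le> q (x + t *\<^sub>R a) - t * q a" using c by (simp add: field_simps)
  qed
  have 2: "c * hbop q a x \<le> hbop q a (c *\<^sub>R x)"
  proof (rule hbop_ge)
    fix t :: real assume t: "t \<ge> 0"
    have "hbop q a x \<le> q (x + (t / c) *\<^sub>R a) - (t / c) * q a"
      using hbop_le[OF sq, of "t / c" a x] t c by simp
    then have "c * hbop q a x \<le> c * (q (x + (t / c) *\<^sub>R a) - (t / c) * q a)"
      using c by simp
    also have "\<dots> = q (c *\<^sub>R x + t *\<^sub>R a) - t * q a"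
    proof -
      have e: "c *\<^sub>R x + t *\<^sub>R a = c *\<^sub>R (x + (t / c) *\<^sub>R a)" using c by (simp add: algebra_simps)
      show ?thesis unfolding e sublin_hom[OF sq c] using c by (simp add: algebra_simps)
    qed
    finally show "c * hbop q a x \<le> q (c *\<^sub>R x + t *\<^sub>R a) - t * q a" .
  qed
  from 1 2 c show "hbop q a (c *\<^sub>R x) = c * hbop q a x" by (simp add: field_simps)
qed

lemma chain_inf_sublin:
  fixes q0 :: "'a::real_vector \<Rightarrow> real"
  assumes C: "C \<noteq> {}" "\<And>q. q \<in> C \<Longrightarrow> sublin q \<and> (\<forall>x. q x \<le> q0 x)"
    and ch: "\<And>q1 q2. q1 \<in> C \<Longrightarrow> q2 \<in> C \<Longrightarrow> (\<forall>x. q1 x \<le> q2 x) \<or> (\<forall>x. q2 x \<le> q1 x)"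
  defines "m \<equiv> \<lambda>x. Inf ((\<lambda>q. q x) ` C)"
  shows "sublin m" "\<And>x. m x \<le> q0 x" "\<And>q x. q \<in> C \<Longrightarrow> m x \<le> q x"
proof -
  have bdd: "bdd_below ((\<lambda>q. q x) ` C)" for x
  proof (rule bdd_belowI2)
    fix q assume "q \<in> C"
    then have "- q (- x) \<le> q x" "q (- x) \<le> q0 (- x)" using C(2) sublin_neg_ge by blast+
    then show "- q0 (- x) \<le> q x" by linarith
  qed
  show lo: "m x \<le> q x" if "q \<in> C" for q x
    unfolding m_def by (rule cInf_lower[OF _ bdd]) (use that in simp)
  have gr: "z \<le> m x" if "\<And>q. q \<in> C \<Longrightarrow> z \<le> q x" for z x
    unfolding m_def by (rule cInf_greatest) (use C(1) that in auto)
  obtain q1 where q1: "q1 \<in> C" using C(1) by blast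
  show "m x \<le> q0 x" for x
  proof -
    have "q1 x \<le> q0 x" using C(2)[OF q1] by blast
    then show ?thesis using lo[OF q1, of x] by linarith
  qed
  show "sublin m" unfolding sublin_def
  proof (intro conjI allI impI)
    fix x y
    show "m (x + y) \<le> m x + m y"
    proof (rule ccontr)
      assume "\<not> m (x + y) \<le> m x + m y"
      then have e: "m (x + y) - m x - m y > 0" by simp
      define e where "e = m (x + y) - m x - m y"
      have "Inf ((\<lambda>q. q x) ` C) < m x + e / 2" using e unfolding e_def m_def by simp
      then obtain qa where qa: "qa \<in> C" "qa x < m x + e / 2"
        using cInf_lessD[of "(\<lambda>q. q x) ` C"] C(1) by auto
      have "Inf ((\<lambda>q. q y) ` C) < m y + e / 2" using e unfolding e_def m_def by simp
      then obtain qb where qb: "qb \<in> C" "qb y < m y + e / 2"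
        using cInf_lessD[of "(\<lambda>q. q y) ` C"] C(1) by auto
      have "\<exists>q\<in>C. q x < m x + e / 2 \<and> q y < m y + e / 2"
      proof (cases "\<forall>z. qa z \<le> qb z")
        case True
        then show ?thesis using qa qb by (intro bexI[of _ qa]) (auto intro: le_less_trans)
      next
        case False
        then have "\<forall>z. qb z \<le> qa z" using ch[OF qa(1) qb(1)] by blast
        then show ?thesis using qa qb by (intro bexI[of _ qb]) (auto intro: le_less_trans)
      qed
      then obtain q where q: "q \<in> C" "q x < m x + e / 2" "q y < m y + e / 2" by blast
      have "m (x + y) \<le> q (x + y)" by (rule lo[OF q(1)])
      also have "\<dots> \<le> q x + q y" using C(2)[OF q(1)] sublin_add by blast
      finally have "m (x + y) \<le> q x + q y" .
      moreover have "q x + q y < m x + m y + e" using q(2,3) by simp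
      ultimately show False unfolding e_def by simp
    qed
  next
    fix c :: real and x assume c: "c > 0"
    have 1: "m (c *\<^sub>R x) / c \<le> m x"
    proof (rule gr)
      fix q assume "q \<in> C"
      then have "m (c *\<^sub>R x) \<le> c * q x" using lo sublin_hom[OF _ c] C(2) by metis
      then show "m (c *\<^sub>R x) / c \<le> q x" using c by (simp add: field_simps)
    qed
    have 2: "c * m x \<le> m (c *\<^sub>R x)"
    proof (rule gr)
      fix q assume "q \<in> C"
      then have "c * m x \<le> c * q x" using lo c by simp
      then show "c * m x \<le> q (c *\<^sub>R x)" using sublin_hom[OF _ c] C(2) \<open>q \<in> C\<close> by metis
    qed
    from 1 2 c show "m (c *\<^sub>R x) = c * m x" by (simp add: field_simps)
  qed
qed

lemma minimal_linear:
  assumes sm: "sublin m" and mn: "\<And>a. hbop m a = m"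
  shows "linear m"
proof -
  have odd: "m (- a) = - m a" for a
  proof -
    have "m (- a) \<le> - m a" using hbop_neg[OF sm, of a] mn[of a] by simp
    moreover have "- m (- a) \<le> m a" by (rule sublin_neg_ge[OF sm])
    ultimately show ?thesis by simp
  qed
  show ?thesis
  proof (rule linearI)
    fix x y
    have "m (- x + - y) \<le> m (- x) + m (- y)" by (rule sublin_add[OF sm])
    then have "m (- (x + y)) \<le> - m x - m y" using odd by (simp add: add.commute)
    then have "m x + m y \<le> m (x + y)" using odd[of "x + y"] by simp
    moreover have "m (x + y) \<le> m x + m y" by (rule sublin_add[OF sm])
    ultimately show "m (x + y) = m x + m y" by simp
  next
    fix c :: real and x
    show "m (c *\<^sub>R x) = c *\<^sub>R m x"
    proof (cases "c \<ge> 0")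
      case True then show ?thesis using sublin_hom0[OF sm] by simp
    next
      case False
      then have "m (c *\<^sub>R x) = m (- ((- c) *\<^sub>R x))" by simp
      also have "\<dots> = - m ((- c) *\<^sub>R x)" by (rule odd)
      also have "\<dots> = c * m x" using sublin_hom[OF sm, of "- c" x] False by simp
      finally show ?thesis by simp
    qed
  qed
qed

lemma exists_minimal_below:
  fixes q0 :: "'a::real_vector \<Rightarrow> real"
  assumes s0: "sublin q0"
  shows "\<exists>m. sublin m \<and> (\<forall>x. m x \<le> q0 x) \<and> linear m"
proof -
  define S where "S = {q. sublin q \<and> (\<forall>x. q x \<le> q0 x)}"
  define r where "r = {(q1, q2). q1 \<in> S \<and> q2 \<in> S \<and> (\<forall>x. q2 x \<le> q1 x)}"
  have rI: "(q1, q2) \<in> r \<longleftrightarrow> q1 \<in> S \<and> q2 \<in> S \<and> (\<forall>x. q2 x \<le> q1 x)" for q1 q2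
    unfolding r_def by simp
  have Fr: "Field r = S"
  proof (rule set_eqI)
    fix q
    show "q \<in> Field r \<longleftrightarrow> q \<in> S"
    proof
      assume "q \<in> Field r"
      then have "q \<in> Domain r \<or> q \<in> Range r" by (simp add: Field_def)
      then show "q \<in> S"
      proof
        assume "q \<in> Domain r"
        then obtain q' where "(q, q') \<in> r" by (rule DomainE)
        then show "q \<in> S" unfolding rI by simp
      next
        assume "q \<in> Range r"
        then obtain q' where "(q', q) \<in> r" by (rule RangeE)
        then show "q \<in> S" unfolding rI by simp
      qed
    next
      assume "q \<in> S"
      then have "(q, q) \<in> r" unfolding rI by simp
      then show "q \<in> Field r" by (rule FieldI1)
    qed
  qed
  have po: "Partial_order r"
    unfolding partial_order_on_def preorder_on_def Fr
  proof (intro conjI)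
    show "r \<subseteq> S \<times> S"
    proof
      fix z assume "z \<in> r"
      then show "z \<in> S \<times> S" by (cases z) (simp add: rI)
    qed
    show "refl_on S r" unfolding refl_on_def
    proof
      fix x assume "x \<in> S" then show "(x, x) \<in> r" unfolding rI by simp
    qed
    show "trans r" unfolding trans_def
    proof (intro allI impI)
      fix a b c assume "(a, b) \<in> r" "(b, c) \<in> r"
      then have "a \<in> S" "c \<in> S" "\<forall>x. b x \<le> a x" "\<forall>x. c x \<le> b x" unfolding rI by simp_all
      then have "\<forall>x. c x \<le> a x" by (meson order_trans)
      then show "(a, c) \<in> r" unfolding rI using \<open>a \<in> S\<close> \<open>c \<in> S\<close> by simp
    qed
    show "antisym r" unfolding antisym_def
    proof (intro allI impI)
      fix a b assume "(a, b) \<in> r" "(b, a) \<in> r"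
      then have "\<forall>x. b x \<le> a x" "\<forall>x. a x \<le> b x" unfolding rI by simp_all
      then show "a = b" by (intro ext) (simp add: order_antisym)
    qed
  qed
  have ub: "\<exists>u\<in>Field r. \<forall>a\<in>C. (a, u) \<in> r" if C: "C \<in> Chains r" for C
  proof (cases "C = {}")
    case True
    have "q0 \<in> S" unfolding S_def using s0 by simp
    then show ?thesis unfolding True Fr by (rule bexI[rotated]) simp
  next
    case False
    have chC: "\<And>a b. a \<in> C \<Longrightarrow> b \<in> C \<Longrightarrow> (a, b) \<in> r \<or> (b, a) \<in> r"
      using C unfolding Chains_def by simp
    have CS: "\<And>q. q \<in> C \<Longrightarrow> q \<in> S"
    proof -
      fix q assume "q \<in> C"
      then have "(q, q) \<in> r" using chC[of q q] by simp
      then show "q \<in> S" unfolding rI by simp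
    qed
    have C2: "\<And>q. q \<in> C \<Longrightarrow> sublin q \<and> (\<forall>x. q x \<le> q0 x)" using CS unfolding S_def by simp
    have ch: "(\<forall>x. q1 x \<le> q2 x) \<or> (\<forall>x. q2 x \<le> q1 x)" if "q1 \<in> C" "q2 \<in> C" for q1 q2
      using chC[OF that] unfolding rI by auto
    define m where "m = (\<lambda>x. Inf ((\<lambda>q. q x) ` C))"
    have I1: "sublin m" unfolding m_def by (rule chain_inf_sublin(1)[OF False C2 ch])
    have I2: "\<And>x. m x \<le> q0 x" unfolding m_def by (rule chain_inf_sublin(2)[OF False C2 ch])
    have I3: "\<And>q x. q \<in> C \<Longrightarrow> m x \<le> q x" unfolding m_def by (rule chain_inf_sublin(3)[OF False C2 ch])
    have mS: "m \<in> S" unfolding S_def using I1 I2 by simp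
    have "\<forall>a\<in>C. (a, m) \<in> r"
    proof
      fix a assume aC: "a \<in> C"
      have "\<forall>x. m x \<le> a x" using I3[OF aC] by simp
      then show "(a, m) \<in> r" unfolding rI using CS[OF aC] mS by simp
    qed
    then show ?thesis using mS unfolding Fr by (rule bexI)
  qed
  obtain m where m: "m \<in> Field r" and mx: "\<forall>a\<in>Field r. (m, a) \<in> r \<longrightarrow> a = m"
    using Zorns_po_lemma[OF po ub] by auto
  have mS0: "m \<in> S" using m Fr by simp
  have mS: "sublin m" "\<forall>x. m x \<le> q0 x" using mS0 unfolding S_def by simp_all
  have "hbop m a = m" for a
  proof -
    have le: "\<forall>x. hbop m a x \<le> m x" using hbop_le_self[OF mS(1)] by simp
    have "\<forall>x. hbop m a x \<le> q0 x" using le mS(2) by (meson order_trans)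
    then have hS: "hbop m a \<in> S" unfolding S_def using hbop_sublin[OF mS(1)] by simp
    then have "(m, hbop m a) \<in> r" unfolding rI using mS0 le by simp
    then show ?thesis using mx hS Fr by simp
  qed
  then have "linear m" by (rule minimal_linear[OF mS(1)])
  then show ?thesis using mS by blast
qed

lemma hahn_banach_sn:
  assumes sp: "seminorm p"
  shows "\<exists>l. linear l \<and> (\<forall>x. \<bar>l x\<bar> \<le> p x) \<and> l v = p v"
proof -
  have spl: "sublin p" by (rule seminorm_sublin[OF sp])
  obtain m where m: "sublin m" "\<forall>x. m x \<le> hbop p v x" "linear m"
    using exists_minimal_below[OF hbop_sublin[OF spl, of v]] by blast
  have le: "m x \<le> p x" for x using m(2) hbop_le_self[OF spl, of v x] by (auto intro: order_trans)
  have "m (- v) \<le> - p v" using m(2) hbop_neg[OF spl, of v] by (auto intro: order_trans)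
  then have "m v \<ge> p v" using linear_neg[OF m(3), of v] by simp
  then have mv: "m v = p v" using le[of v] by simp
  have "\<bar>m x\<bar> \<le> p x" for x
    using le[of x] le[of "- x"] linear_neg[OF m(3), of x] sn_neg[OF sp, of x] by simp
  then show ?thesis using m(3) mv by blast
qed

lemma hb_cont:
  assumes sn: "\<forall>p\<in>P. seminorm p" and pP: "p \<in> P"
  shows "\<exists>l. cont_linear_form P l \<and> dual_seminorm p l \<le> 1 \<and> l v = p v"
proof -
  obtain l where l: "linear l" "\<forall>x. \<bar>l x\<bar> \<le> p x" "l v = p v"
    using hahn_banach_sn[of p v] sn pP by blast
  have "cont_linear_form P l"
    by (rule cont_from_bound[OF sn l(1) pP, of 1]) (use l(2) in simp)
  moreover have "dual_seminorm p l \<le> 1" by (rule dual_le1) (use l(2) in \<open>simp add: abs_le_iff\<close>)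
  ultimately show ?thesis using l(3) by blast
qed



lemma mvt_step:
  fixes \<phi> \<psi> :: "real \<Rightarrow> real"
  assumes der: "\<And>t. \<bar>t\<bar> < \<delta> \<Longrightarrow> (\<phi> has_real_derivative \<psi> t) (at t)"
    and h: "h \<noteq> 0" "\<bar>h\<bar> < \<delta>"
  shows "\<exists>z. \<bar>z\<bar> < \<bar>h\<bar> \<and> (\<phi> h - \<phi> 0) / h = \<psi> z"
proof -
  have gen: "\<exists>z. a < z \<and> z < b \<and> \<phi> b - \<phi> a = (b - a) * \<psi> z"
    if ab: "a < b" "\<bar>a\<bar> < \<delta>" "\<bar>b\<bar> < \<delta>" for a b
  proof -
    have inside: "\<bar>t\<bar> < \<delta>" if "a \<le> t" "t \<le> b" for t using that ab by linarith
    have cont: "continuous_on {a..b} \<phi>"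
      by (rule DERIV_continuous_on[of _ _ \<psi>]) (use der inside in \<open>auto intro: has_field_derivative_at_within\<close>)
    have dif: "\<phi> differentiable (at x)" if "a < x" "x < b" for x
      using der[OF inside] that unfolding real_differentiable_def by (meson less_imp_le)
    obtain l z where z: "a < z" "z < b" "DERIV \<phi> z :> l" "\<phi> b - \<phi> a = (b - a) * l"
      using MVT[OF ab(1) cont dif] by blast
    have "l = \<psi> z" using DERIV_unique[OF z(3) der[OF inside]] z by simp
    then show ?thesis using z by blast
  qed
  show ?thesis
  proof (cases "h > 0")
    case True
    obtain z where "0 < z" "z < h" "\<phi> h - \<phi> 0 = (h - 0) * \<psi> z"
      using gen[of 0 h] True h by auto
    then show ?thesis using True by (intro exI[of _ z]) auto
  next
    case False
    then have hn: "h < 0" using h by simp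
    obtain z where "h < z" "z < 0" "\<phi> 0 - \<phi> h = (0 - h) * \<psi> z"
      using gen[of h 0] hn h by auto
    then have "(\<phi> h - \<phi> 0) / h = \<psi> z" "\<bar>z\<bar> < \<bar>h\<bar>" using hn by (auto simp: field_simps)
    then show ?thesis by blast
  qed
qed

lemma mvt_holder:
  fixes \<phi> \<psi> :: "real \<Rightarrow> real"
  assumes der: "\<And>t. \<bar>t\<bar> < \<delta> \<Longrightarrow> (\<phi> has_real_derivative \<psi> t) (at t)"
    and hol: "\<And>t. \<bar>t\<bar> < \<delta> \<Longrightarrow> \<bar>\<psi> t - \<psi> 0\<bar> \<le> K * \<bar>t\<bar> powr a"
    and aK: "a \<ge> 0" "K \<ge> 0" and h: "h \<noteq> 0" "\<bar>h\<bar> < \<delta>"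
  shows "\<bar>(\<phi> h - \<phi> 0) / h - \<psi> 0\<bar> \<le> K * \<bar>h\<bar> powr a"
proof -
  obtain z where z: "\<bar>z\<bar> < \<bar>h\<bar>" "(\<phi> h - \<phi> 0) / h = \<psi> z" using mvt_step[OF der h] by blast
  have "\<bar>\<psi> z - \<psi> 0\<bar> \<le> K * \<bar>z\<bar> powr a" using hol z h by simp
  also have "\<dots> \<le> K * \<bar>h\<bar> powr a" using z aK by (intro mult_left_mono powr_mono2) auto
  finally show ?thesis using z by simp
qed

lemma dq_linear:
  assumes "linear l"
  shows "diff_quot (l \<circ> g) i x h = l (diff_quot g i x h)"
  unfolding diff_quot_def using linear_scale[OF assms] linear_diff[OF assms] by simp

lemma dq_local:
  assumes "open \<Omega>" "x \<in> \<Omega>" "\<And>y. y \<in> \<Omega> \<Longrightarrow> G y = H y"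
  shows "eventually (\<lambda>h. diff_quot G i x h = diff_quot H i x h) (at (0::real))"
proof -
  obtain e where e: "e > 0" "ball x e \<subseteq> \<Omega>" using assms(1,2) open_contains_ball by blast
  show ?thesis unfolding eventually_at
  proof (intro exI[of _ e] conjI ballI impI)
    fix h :: real assume "h \<in> UNIV" "h \<noteq> 0 \<and> dist h 0 < e"
    then have "x + h *\<^sub>R axis i 1 \<in> ball x e" by (simp add: dist_norm)
    then have "x + h *\<^sub>R axis i 1 \<in> \<Omega>" using e by blast
    then show "diff_quot G i x h = diff_quot H i x h" unfolding diff_quot_def using assms(2,3) by simp
  qed (use e in simp)
qed

lemma the_limit:
  assumes "Hausdorff_space X" "limitin X g y (at (0::real))"
  shows "(THE y. limitin X g y (at 0)) = y"
  using assms limitin_Hausdorff_unique[OF _ _ trivial_limit_at assms(1)] by blast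

lemma partial_step:
  assumes sn: "\<forall>p\<in>P. seminorm p" and haus: "Hausdorff_space (seminorm_topology P)"
    and op: "open \<Omega>" and cl: "cont_linear_form P l" and x: "x \<in> \<Omega>"
    and GL: "\<And>z. z \<in> \<Omega> \<Longrightarrow> G z = l (g z)" and hp: "has_partial_at P g i x"
  shows "has_partial_at {abs} G i x \<and> partial {abs} i G x = l (partial P i g x)"
proof -
  have lin: "linear l" and cm: "continuous_map (seminorm_topology P) euclideanreal l"
    using cl unfolding cont_linear_form_def by auto
  obtain y where y: "limitin (seminorm_topology P) (diff_quot g i x) y (at 0)"
    using hp unfolding has_partial_at_def by (elim exE)
  have py: "partial P i g x = y" unfolding partial_def by (rule the_limit[OF haus y])
  have "limitin euclideanreal (l \<circ> diff_quot g i x) (l y) (at 0)"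
    by (rule continuous_map_limit[OF cm y])
  moreover have "l \<circ> diff_quot g i x = diff_quot (l \<circ> g) i x"
    by (rule ext) (simp add: dq_linear[OF lin])
  ultimately have "limitin euclideanreal (diff_quot (l \<circ> g) i x) (l y) (at 0)" by simp
  moreover have "eventually (\<lambda>h. diff_quot (l \<circ> g) i x h = diff_quot G i x h) (at (0::real))"
    by (rule dq_local[OF op x]) (use GL in simp)
  ultimately have L: "limitin euclideanreal (diff_quot G i x) (l y) (at 0)"
    by (rule limitin_transform_eventually[rotated])
  then have L': "limitin (seminorm_topology {abs}) (diff_quot G i x) (l y) (at 0)"
    unfolding sn_abs_topology .
  have "partial {abs} i G x = l y" unfolding partial_def sn_abs_topology
    by (rule the_limit[OF _ L]) simp
  moreover have "has_partial_at {abs} G i x" unfolding has_partial_at_def using L' by (rule exI)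
  ultimately show ?thesis using py by simp
qed

lemma partials_transfer:
  assumes sn: "\<forall>p\<in>P. seminorm p" and haus: "Hausdorff_space (seminorm_topology P)"
    and op: "open \<Omega>" and cl: "cont_linear_form P l"
  shows "partials_exist P \<Omega> is f \<Longrightarrow> partials_exist {abs} \<Omega> is (l \<circ> f) \<and>
    (\<forall>x\<in>\<Omega>. iter_partial {abs} is (l \<circ> f) x = l (iter_partial P is f x))"
proof (induction "is")
  case Nil
  then show ?case by simp
next
  case (Cons i "is")
  then have pe: "partials_exist P \<Omega> is f" and hp: "\<forall>x\<in>\<Omega>. has_partial_at P (iter_partial P is f) i x"
    by simp_all
  have IH: "partials_exist {abs} \<Omega> is (l \<circ> f) \<and>
    (\<forall>x\<in>\<Omega>. iter_partial {abs} is (l \<circ> f) x = l (iter_partial P is f x))" by (rule Cons.IH[OF pe])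
  then have pe': "partials_exist {abs} \<Omega> is (l \<circ> f)" by (rule conjunct1)
  have eq: "\<And>x. x \<in> \<Omega> \<Longrightarrow> iter_partial {abs} is (l \<circ> f) x = l (iter_partial P is f x)"
    using IH[THEN conjunct2] by (rule bspec)
  have st: "has_partial_at {abs} (iter_partial {abs} is (l \<circ> f)) i x \<and>
      partial {abs} i (iter_partial {abs} is (l \<circ> f)) x = l (partial P i (iter_partial P is f) x)"
    if "x \<in> \<Omega>" for x
    by (rule partial_step[OF sn haus op cl that eq]) (use hp that in simp_all)
  show ?case using pe' st by (simp add: comp_def)
qed



lemma supnn_le: "0 \<le> M \<Longrightarrow> (\<And>x. x \<in> S \<Longrightarrow> x \<le> M) \<Longrightarrow> supnn S \<le> M"
  unfolding supnn_def by (rule cSup_least) auto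

lemma supnn_ge: "bdd_above S \<Longrightarrow> x \<in> S \<Longrightarrow> x \<le> supnn S"
  unfolding supnn_def by (rule cSup_upper) auto

lemma supnn_nonneg: "bdd_above S \<Longrightarrow> 0 \<le> supnn S"
  unfolding supnn_def by (rule cSup_upper) auto

lemma lbound:
  fixes l :: "'v \<Rightarrow> real" and w :: "'z \<Rightarrow> real" and F :: "('v \<Rightarrow> real) set"
  assumes F: "finite F" and c: "c \<ge> 0" and lb: "\<And>v. \<bar>l v\<bar> \<le> c * (\<Sum>q\<in>F. q v)"
    and qb: "\<forall>q\<in>F. \<exists>B. \<forall>z\<in>Z. q (h z) / w z \<le> B" and w: "\<And>z. z \<in> Z \<Longrightarrow> w z > 0"
  shows "\<exists>B. \<forall>z\<in>Z. \<bar>l (h z)\<bar> / w z \<le> B"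
proof -
  from bchoice[OF qb] obtain Bf where Bf: "\<forall>q\<in>F. \<forall>z\<in>Z. q (h z) / w z \<le> Bf q" by (elim exE)
  have "\<bar>l (h z)\<bar> / w z \<le> c * (\<Sum>q\<in>F. Bf q)" if z: "z \<in> Z" for z
  proof -
    have "\<bar>l (h z)\<bar> / w z \<le> c * (\<Sum>q\<in>F. q (h z)) / w z"
      using lb[of "h z"] w[OF z] by (intro divide_right_mono) auto
    also have "\<dots> = c * (\<Sum>q\<in>F. q (h z) / w z)" by (simp only: sum_divide_distrib[symmetric] times_divide_eq_right)
    also have "\<dots> \<le> c * (\<Sum>q\<in>F. Bf q)"
      using Bf z c by (intro mult_left_mono sum_mono) auto
    finally show ?thesis .
  qed
  then show ?thesis by (intro exI[of _ "c * (\<Sum>q\<in>F. Bf q)"]) simp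
qed

lemma forward:
  fixes P :: "('v::real_vector \<Rightarrow> real) set"
    and \<Omega> :: "(real^'m) set" and k :: real and f :: "real^'m \<Rightarrow> 'v"
  assumes sn: "\<forall>p\<in>P. seminorm p" and haus: "Hausdorff_space (seminorm_topology P)"
    and op: "open \<Omega>" and ck: "Ck P k \<Omega> f" and pP: "p \<in> P"
  shows "\<exists>C>0. \<forall>l. cont_linear_form P l \<longrightarrow>
        Ck {abs} k \<Omega> (l \<circ> f) \<and>
        ereal (Ck_norm {abs} abs k \<Omega> (l \<circ> f)) \<le> ereal C * dual_seminorm p l"
proof -
  define n where "n = intpart k"
  define a where "a = fracpart k"
  have bnd: "\<forall>q\<in>P. \<exists>B. \<forall>x\<in>\<Omega>. q (f x) \<le> B" using ck unfolding Ck_def by simp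
  have hol: "\<And>is. length is \<le> n \<Longrightarrow> partials_exist P \<Omega> is f \<and>
        (\<forall>q\<in>P. \<exists>B. \<forall>s\<in>\<Omega>. \<forall>t\<in>\<Omega>. s \<noteq> t \<longrightarrow>
            q (iter_partial P is f s - iter_partial P is f t) / dist s t powr a \<le> B)"
    using ck unfolding Ck_def n_def a_def by simp
  obtain B0 where B0: "\<forall>x\<in>\<Omega>. p (f x) \<le> B0" using bnd pP by auto
  have "\<forall>is. \<exists>B. length is \<le> n \<longrightarrow> (\<forall>s\<in>\<Omega>. \<forall>t\<in>\<Omega>. s \<noteq> t \<longrightarrow>
            p (iter_partial P is f s - iter_partial P is f t) / dist s t powr a \<le> B)"
    using hol pP by auto
  then obtain Bh where Bh: "\<And>is s t. length is \<le> n \<Longrightarrow> s \<in> \<Omega> \<Longrightarrow> t \<in> \<Omega> \<Longrightarrow> s \<noteq> t \<Longrightarrow>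
            p (iter_partial P is f s - iter_partial P is f t) / dist s t powr a \<le> Bh is"
    by (metis (no_types, lifting) choice)
  define L where "L = {is :: 'm list. set is \<subseteq> UNIV \<and> length is \<le> n}"
  have finL: "finite L" unfolding L_def by (rule finite_lists_length_le) simp
  define C where "C = 1 + \<bar>B0\<bar> + (\<Sum>is\<in>L. \<bar>Bh is\<bar>)"
  have SL: "(\<Sum>is\<in>L. \<bar>Bh is\<bar>) \<ge> 0" by (simp add: sum_nonneg)
  have Cpos: "C > 0" unfolding C_def using SL abs_ge_zero[of B0] by linarith
  have B0C: "B0 \<le> C" unfolding C_def using SL abs_ge_self[of B0] by linarith
  have BhC: "Bh is \<le> C" if "length is \<le> n" for "is"
  proof -
    have "is \<in> L" unfolding L_def using that by simp
    then have "\<bar>Bh is\<bar> \<le> (\<Sum>is\<in>L. \<bar>Bh is\<bar>)" by (rule member_le_sum) (use finL in simp_all)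
    then show ?thesis unfolding C_def by simp
  qed
  have dpos: "dist s t powr a > 0" if "s \<noteq> t" for s t :: "real^'m" using that by simp
  have main: "Ck {abs} k \<Omega> (l \<circ> f) \<and>
        ereal (Ck_norm {abs} abs k \<Omega> (l \<circ> f)) \<le> ereal C * dual_seminorm p l"
    if cl: "cont_linear_form P l" for l
  proof -
    have lin: "linear l" using cl unfolding cont_linear_form_def by simp
    obtain F c where F: "finite F" "F \<subseteq> P" "c \<ge> 0" and lb: "\<And>v. \<bar>l v\<bar> \<le> c * (\<Sum>q\<in>F. q v)"
      using cont_bound[OF sn cl] by auto
    have tr: "partials_exist {abs} \<Omega> is (l \<circ> f) \<and>
        (\<forall>x\<in>\<Omega>. iter_partial {abs} is (l \<circ> f) x = l (iter_partial P is f x))"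
      if "length is \<le> n" for "is"
      using partials_transfer[OF sn haus op cl] hol[OF that] by simp
    have ck1: "\<forall>p'\<in>{abs}. \<exists>B. \<forall>x\<in>\<Omega>. p' ((l \<circ> f) x) \<le> B"
    proof -
      have "\<exists>B. \<forall>x\<in>\<Omega>. \<bar>l (f x)\<bar> / 1 \<le> B"
        by (rule lbound[OF F(1) F(3) lb]) (use bnd F(2) in auto)
      then show ?thesis by simp
    qed
    have ck2: "partials_exist {abs} \<Omega> is (l \<circ> f) \<and>
        (\<forall>p'\<in>{abs}. \<exists>B. \<forall>s\<in>\<Omega>. \<forall>t\<in>\<Omega>. s \<noteq> t \<longrightarrow>
            p' (iter_partial {abs} is (l \<circ> f) s - iter_partial {abs} is (l \<circ> f) t) / dist s t powr a \<le> B)"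
      if len: "length is \<le> n" for "is"
    proof -
      define g where "g = iter_partial P is f"
      define Z where "Z = {(s, t). s \<in> \<Omega> \<and> t \<in> \<Omega> \<and> s \<noteq> t}"
      have qb: "\<forall>q\<in>F. \<exists>B. \<forall>z\<in>Z. q ((\<lambda>(s, t). g s - g t) z) / (\<lambda>(s, t). dist s t powr a) z \<le> B"
      proof
        fix q assume "q \<in> F"
        then have "q \<in> P" using F(2) by auto
        then obtain B where "\<forall>s\<in>\<Omega>. \<forall>t\<in>\<Omega>. s \<noteq> t \<longrightarrow> q (g s - g t) / dist s t powr a \<le> B"
          using hol[OF len] unfolding g_def by auto
        then show "\<exists>B. \<forall>z\<in>Z. q ((\<lambda>(s, t). g s - g t) z) / (\<lambda>(s, t). dist s t powr a) z \<le> B"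
          unfolding Z_def by auto
      qed
      obtain B where B: "\<forall>z\<in>Z. \<bar>l ((\<lambda>(s, t). g s - g t) z)\<bar> / (\<lambda>(s, t). dist s t powr a) z \<le> B"
        using lbound[OF F(1) F(3) lb qb] Z_def dpos by auto
      have "\<forall>s\<in>\<Omega>. \<forall>t\<in>\<Omega>. s \<noteq> t \<longrightarrow>
            \<bar>iter_partial {abs} is (l \<circ> f) s - iter_partial {abs} is (l \<circ> f) t\<bar> / dist s t powr a \<le> B"
      proof (intro ballI impI)
        fix s t assume st: "s \<in> \<Omega>" "t \<in> \<Omega>" "s \<noteq> t"
        then have "(s, t) \<in> Z" unfolding Z_def by simp
        then have "\<bar>l (g s - g t)\<bar> / dist s t powr a \<le> B" using B by auto
        moreover have "iter_partial {abs} is (l \<circ> f) s - iter_partial {abs} is (l \<circ> f) t = l (g s - g t)"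
          using tr[OF len] st linear_diff[OF lin] unfolding g_def by simp
        ultimately show "\<bar>iter_partial {abs} is (l \<circ> f) s - iter_partial {abs} is (l \<circ> f) t\<bar> / dist s t powr a \<le> B"
          by simp
      qed
      then show ?thesis using tr[OF len] by auto
    qed
    have ckl: "Ck {abs} k \<Omega> (l \<circ> f)"
      unfolding Ck_def using ck1 ck2 unfolding n_def a_def by blast
    have nb: "ereal (Ck_norm {abs} abs k \<Omega> (l \<circ> f)) \<le> ereal C * dual_seminorm p l"
    proof (cases "dual_seminorm p l = \<infinity>")
      case True
      then show ?thesis using Cpos by simp
    next
      case False
      obtain d where d: "d \<ge> 0" "dual_seminorm p l = ereal d" "\<And>v. \<bar>l v\<bar> \<le> d * p v"
        using dual_finite[OF _ lin False] sn pP by auto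
      have sp: "seminorm p" using sn pP by simp
      have CD: "0 \<le> C * d" using Cpos d(1) by simp
      have A: "supnn ((\<lambda>x. \<bar>(l \<circ> f) x\<bar>) ` \<Omega>) \<le> C * d"
      proof (rule supnn_le[OF CD])
        fix y assume "y \<in> (\<lambda>x. \<bar>(l \<circ> f) x\<bar>) ` \<Omega>"
        then obtain x where x: "x \<in> \<Omega>" "y = \<bar>l (f x)\<bar>" by auto
        have "\<bar>l (f x)\<bar> \<le> d * p (f x)" by (rule d(3))
        also have "\<dots> \<le> d * C" using B0 x(1) B0C d(1) by (intro mult_left_mono) auto
        finally show "y \<le> C * d" using x by (simp add: mult.commute)
      qed
      have H: "hoelder_semi abs (fracpart k) \<Omega> (iter_partial {abs} is (l \<circ> f)) \<le> C * d"
        if len: "length is \<le> n" for "is"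
        unfolding hoelder_semi_def a_def[symmetric]
      proof (rule supnn_le[OF CD])
        fix y assume "y \<in> {\<bar>iter_partial {abs} is (l \<circ> f) s - iter_partial {abs} is (l \<circ> f) t\<bar> / dist s t powr a |s t.
             s \<in> \<Omega> \<and> t \<in> \<Omega> \<and> s \<noteq> t}"
        then obtain s t where st: "s \<in> \<Omega>" "t \<in> \<Omega>" "s \<noteq> t"
          and y: "y = \<bar>iter_partial {abs} is (l \<circ> f) s - iter_partial {abs} is (l \<circ> f) t\<bar> / dist s t powr a"
          by auto
        define g where "g = iter_partial P is f"
        have "iter_partial {abs} is (l \<circ> f) s - iter_partial {abs} is (l \<circ> f) t = l (g s - g t)"
          using tr[OF len] st linear_diff[OF lin] unfolding g_def by simp
        then have "y = \<bar>l (g s - g t)\<bar> / dist s t powr a" using y by simp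
        also have "\<dots> \<le> d * p (g s - g t) / dist s t powr a"
          using d(3) dpos[OF st(3)] by (intro divide_right_mono) auto
        also have "\<dots> = d * (p (g s - g t) / dist s t powr a)" by simp
        also have "\<dots> \<le> d * Bh is" using Bh[OF len st] d(1) unfolding g_def by (intro mult_left_mono) auto
        also have "\<dots> \<le> d * C" using BhC[OF len] d(1) by (intro mult_left_mono) auto
        finally show "y \<le> C * d" by (simp add: mult.commute)
      qed
      have "Ck_norm {abs} abs k \<Omega> (l \<circ> f) \<le> C * d"
        unfolding Ck_norm_def
      proof (rule supnn_le[OF CD])
        fix y assume "y \<in> insert (supnn ((\<lambda>x. \<bar>(l \<circ> f) x\<bar>) ` \<Omega>))
          {hoelder_semi abs (fracpart k) \<Omega> (iter_partial {abs} is (l \<circ> f)) |is. length is \<le> intpart k}"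
        then show "y \<le> C * d" using A H unfolding n_def by auto
      qed
      then show ?thesis using d(2) by simp
    qed
    show ?thesis using ckl nb by simp
  qed
  show ?thesis using Cpos main by blast
qed



lemma powr_at0:
  fixes a K :: real assumes a: "a > 0"
  shows "((\<lambda>h::real. K * \<bar>h\<bar> powr a) \<longlongrightarrow> 0) (at 0)"
proof -
  have "((\<lambda>h::real. \<bar>h\<bar>) \<longlongrightarrow> 0) (at 0)" by (rule tendsto_rabs_zero[OF tendsto_ident_at])
  then have "((\<lambda>h::real. \<bar>h\<bar> powr a) \<longlongrightarrow> 0) (at 0)"
    by (rule tendsto_zero_powrI[OF _ tendsto_const]) (use a in auto)
  then have "((\<lambda>h::real. K * \<bar>h\<bar> powr a) \<longlongrightarrow> K * 0) (at 0)" by (rule tendsto_mult[OF tendsto_const])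
  then show ?thesis by simp
qed

lemma powr_seq0:
  fixes a K \<delta> :: real assumes a: "a > 0"
  shows "((\<lambda>n. K * \<bar>\<delta> / real (n + 2)\<bar> powr a) \<longlongrightarrow> 0) sequentially"
proof -
  have "((\<lambda>n. \<delta> / real n) \<longlongrightarrow> 0) sequentially" by (rule lim_const_over_n)
  then have s: "((\<lambda>n. \<delta> / real (n + 2)) \<longlongrightarrow> 0) sequentially"
    by (rule LIMSEQ_ignore_initial_segment)
  have "((\<lambda>n. \<bar>\<delta> / real (n + 2)\<bar>) \<longlongrightarrow> 0) sequentially" by (rule tendsto_rabs_zero[OF s])
  then have "((\<lambda>n. \<bar>\<delta> / real (n + 2)\<bar> powr a) \<longlongrightarrow> 0) sequentially"
    by (rule tendsto_zero_powrI[OF _ tendsto_const]) (use a in auto)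
  then have "((\<lambda>n. K * \<bar>\<delta> / real (n + 2)\<bar> powr a) \<longlongrightarrow> K * 0) sequentially" by (rule tendsto_mult[OF tendsto_const])
  then show ?thesis by simp
qed

lemma weak_to_strong:
  fixes g :: "real^'m \<Rightarrow> 'v::real_vector" and P :: "('v \<Rightarrow> real) set"
    and D :: "('v \<Rightarrow> real) \<Rightarrow> real^'m \<Rightarrow> real"
  assumes sn: "\<forall>p\<in>P. seminorm p" and sc: "seq_complete P" and op: "open \<Omega>" and x: "x \<in> \<Omega>"
    and a: "a > 0"
    and H: "\<And>p. p \<in> P \<Longrightarrow> \<exists>C\<ge>0. \<forall>l. cont_linear_form P l \<and> dual_seminorm p l \<le> 1 \<longrightarrow>
        (\<forall>y\<in>\<Omega>. ((\<lambda>h. diff_quot (l \<circ> g) i y h) \<longlongrightarrow> D l y) (at 0)) \<and>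
        (\<forall>s\<in>\<Omega>. \<forall>t\<in>\<Omega>. \<bar>D l s - D l t\<bar> \<le> C * dist s t powr a)"
  shows "has_partial_at P g i x"
proof -
  obtain \<delta> where \<delta>: "\<delta> > 0" "ball x \<delta> \<subseteq> \<Omega>" using op x open_contains_ball by blast
  define e where "e = axis i (1::real)"
  have ine: "x + t *\<^sub>R e \<in> \<Omega>" if "\<bar>t\<bar> < \<delta>" for t
  proof -
    have "x + t *\<^sub>R e \<in> ball x \<delta>" using that unfolding e_def by (simp add: dist_norm)
    then show ?thesis using \<delta>(2) by (rule subsetD[rotated])
  qed
  have dist_e: "dist (x + t *\<^sub>R e) x = \<bar>t\<bar>" for t unfolding e_def by (simp add: dist_norm)
  have claimA: "\<bar>diff_quot (l \<circ> g) i x h - D l x\<bar> \<le> C * \<bar>h\<bar> powr a"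
    if C: "C \<ge> 0" and Dl: "\<forall>y\<in>\<Omega>. ((\<lambda>h. diff_quot (l \<circ> g) i y h) \<longlongrightarrow> D l y) (at 0)"
      and hl: "\<forall>s\<in>\<Omega>. \<forall>t\<in>\<Omega>. \<bar>D l s - D l t\<bar> \<le> C * dist s t powr a"
      and h: "h \<noteq> 0" "\<bar>h\<bar> < \<delta>" for l C h
  proof -
    define \<phi> where "\<phi> = (\<lambda>t. l (g (x + t *\<^sub>R e)))"
    define \<psi> where "\<psi> = (\<lambda>t. D l (x + t *\<^sub>R e))"
    have der: "(\<phi> has_real_derivative \<psi> t) (at t)" if t: "\<bar>t\<bar> < \<delta>" for t
    proof -
      have lim: "((\<lambda>h. diff_quot (l \<circ> g) i (x + t *\<^sub>R e) h) \<longlongrightarrow> \<psi> t) (at 0)"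
        using Dl ine[OF t] unfolding \<psi>_def by simp
      have eq: "(\<lambda>h. diff_quot (l \<circ> g) i (x + t *\<^sub>R e) h) = (\<lambda>h. (\<phi> (t + h) - \<phi> t) / h)"
      proof
        fix h
        have eq2: "x + (t + h) *\<^sub>R e = x + t *\<^sub>R e + h *\<^sub>R e" by (simp add: algebra_simps)
        show "diff_quot (l \<circ> g) i (x + t *\<^sub>R e) h = (\<phi> (t + h) - \<phi> t) / h"
          unfolding diff_quot_def \<phi>_def e_def[symmetric] eq2 by (simp add: divide_inverse mult.commute)
      qed
      show ?thesis unfolding DERIV_def using lim unfolding eq .
    qed
    have hol: "\<bar>\<psi> t - \<psi> 0\<bar> \<le> C * \<bar>t\<bar> powr a" if t: "\<bar>t\<bar> < \<delta>" for t
    proof -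
      have "\<bar>D l (x + t *\<^sub>R e) - D l x\<bar> \<le> C * dist (x + t *\<^sub>R e) x powr a"
        using hl ine[OF t] x by blast
      then show ?thesis unfolding \<psi>_def dist_e by simp
    qed
    have "\<bar>(\<phi> h - \<phi> 0) / h - \<psi> 0\<bar> \<le> C * \<bar>h\<bar> powr a"
      by (rule mvt_holder[OF der hol _ C h]) (use a in auto)
    moreover have "diff_quot (l \<circ> g) i x h = (\<phi> h - \<phi> 0) / h"
      unfolding diff_quot_def \<phi>_def e_def by (simp add: divide_inverse mult.commute)
    moreover have "\<psi> 0 = D l x" unfolding \<psi>_def by simp
    ultimately show ?thesis by simp
  qed
  have claimB: "\<exists>C\<ge>0. \<forall>h h'. h \<noteq> 0 \<longrightarrow> h' \<noteq> 0 \<longrightarrow> \<bar>h\<bar> < \<delta> \<longrightarrow> \<bar>h'\<bar> < \<delta> \<longrightarrow>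
      p (diff_quot g i x h - diff_quot g i x h') \<le> C * (\<bar>h\<bar> powr a + \<bar>h'\<bar> powr a)"
    if pP: "p \<in> P" for p
  proof -
    obtain C where C: "C \<ge> 0" and CH: "\<forall>l. cont_linear_form P l \<and> dual_seminorm p l \<le> 1 \<longrightarrow>
        (\<forall>y\<in>\<Omega>. ((\<lambda>h. diff_quot (l \<circ> g) i y h) \<longlongrightarrow> D l y) (at 0)) \<and>
        (\<forall>s\<in>\<Omega>. \<forall>t\<in>\<Omega>. \<bar>D l s - D l t\<bar> \<le> C * dist s t powr a)"
      using H[OF pP] by blast
    have "p (diff_quot g i x h - diff_quot g i x h') \<le> C * (\<bar>h\<bar> powr a + \<bar>h'\<bar> powr a)"
      if h: "h \<noteq> 0" "h' \<noteq> 0" "\<bar>h\<bar> < \<delta>" "\<bar>h'\<bar> < \<delta>" for h h'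
    proof -
      define v where "v = diff_quot g i x h - diff_quot g i x h'"
      obtain l where l: "cont_linear_form P l" "dual_seminorm p l \<le> 1" "l v = p v"
        using hb_cont[OF sn pP, of v] by blast
      have lin: "linear l" using l(1) unfolding cont_linear_form_def by simp
      have Dl: "\<forall>y\<in>\<Omega>. ((\<lambda>h. diff_quot (l \<circ> g) i y h) \<longlongrightarrow> D l y) (at 0)"
        and hl: "\<forall>s\<in>\<Omega>. \<forall>t\<in>\<Omega>. \<bar>D l s - D l t\<bar> \<le> C * dist s t powr a"
        using CH l(1,2) by auto
      have "p v = l v" using l(3) by simp
      also have "\<dots> = diff_quot (l \<circ> g) i x h - diff_quot (l \<circ> g) i x h'"
        unfolding v_def dq_linear[OF lin] linear_diff[OF lin] ..
      also have "\<dots> \<le> \<bar>diff_quot (l \<circ> g) i x h - D l x\<bar> + \<bar>diff_quot (l \<circ> g) i x h' - D l x\<bar>"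
        by linarith
      also have "\<dots> \<le> C * \<bar>h\<bar> powr a + C * \<bar>h'\<bar> powr a"
        using claimA[OF C Dl hl h(1,3)] claimA[OF C Dl hl h(2,4)] by linarith
      finally show ?thesis unfolding v_def by (simp add: algebra_simps)
    qed
    then show ?thesis using C by blast
  qed
  then have "\<forall>p\<in>P. \<exists>C. C \<ge> 0 \<and> (\<forall>h h'. h \<noteq> 0 \<longrightarrow> h' \<noteq> 0 \<longrightarrow> \<bar>h\<bar> < \<delta> \<longrightarrow> \<bar>h'\<bar> < \<delta> \<longrightarrow>
      p (diff_quot g i x h - diff_quot g i x h') \<le> C * (\<bar>h\<bar> powr a + \<bar>h'\<bar> powr a))" by auto
  from bchoice[OF this] obtain Cp where Cp: "\<forall>p\<in>P. Cp p \<ge> 0 \<and> (\<forall>h h'. h \<noteq> 0 \<longrightarrow> h' \<noteq> 0 \<longrightarrow> \<bar>h\<bar> < \<delta> \<longrightarrow> \<bar>h'\<bar> < \<delta> \<longrightarrow>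
      p (diff_quot g i x h - diff_quot g i x h') \<le> Cp p * (\<bar>h\<bar> powr a + \<bar>h'\<bar> powr a))"
    by (elim exE)
  define hs where "hs = (\<lambda>n::nat. \<delta> / real (n + 2))"
  have hs: "hs n \<noteq> 0" "\<bar>hs n\<bar> < \<delta>" for n
  proof -
    have d2: "real (n + 2) \<ge> 2" by simp
    have pos: "hs n > 0" unfolding hs_def using \<delta>(1) d2 by simp
    have "hs n < \<delta>" unfolding hs_def using \<delta>(1) d2 by (simp add: divide_less_eq)
    then show "hs n \<noteq> 0" "\<bar>hs n\<bar> < \<delta>" using pos by auto
  qed
  define u where "u = (\<lambda>n. diff_quot g i x (hs n))"
  have useq: "p (u m - u n) \<le> Cp p * (\<bar>hs m\<bar> powr a + \<bar>hs n\<bar> powr a)" if "p \<in> P" for p m n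
    using Cp that hs unfolding u_def by simp
  have s0: "((\<lambda>n. K * \<bar>hs n\<bar> powr a) \<longlongrightarrow> 0) sequentially" for K
    unfolding hs_def by (rule powr_seq0[OF a])
  have cauchy: "\<forall>p\<in>P. \<forall>e>0. \<exists>N. \<forall>m\<ge>N. \<forall>n\<ge>N. p (u m - u n) < e"
  proof (intro ballI allI impI)
    fix p and r :: real assume pP: "p \<in> P" and r: "r > 0"
    define K where "K = Cp p"
    have K: "K \<ge> 0" unfolding K_def using Cp pP by simp
    have "eventually (\<lambda>n. K * \<bar>hs n\<bar> powr a < r / 2) sequentially"
      by (rule order_tendstoD(2)[OF s0]) (use r in simp)
    then obtain N where N: "\<And>n. n \<ge> N \<Longrightarrow> K * \<bar>hs n\<bar> powr a < r / 2"
      unfolding eventually_sequentially by blast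
    have "p (u m - u n) < r" if "m \<ge> N" "n \<ge> N" for m n
    proof -
      have "p (u m - u n) \<le> K * (\<bar>hs m\<bar> powr a + \<bar>hs n\<bar> powr a)" using useq[OF pP] unfolding K_def by simp
      also have "\<dots> = K * \<bar>hs m\<bar> powr a + K * \<bar>hs n\<bar> powr a" by (simp add: algebra_simps)
      also have "\<dots> < r" using N[OF that(1)] N[OF that(2)] by linarith
      finally show ?thesis .
    qed
    then show "\<exists>N. \<forall>m\<ge>N. \<forall>n\<ge>N. p (u m - u n) < r" by blast
  qed
  obtain y where y: "limitin (seminorm_topology P) u y sequentially"
    using sc cauchy unfolding seq_complete_def by blast
  have yl: "\<forall>p\<in>P. \<forall>e>0. eventually (\<lambda>n. p (u n - y) < e) sequentially"
    using y unfolding limitin_sn[OF sn] .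
  have "limitin (seminorm_topology P) (diff_quot g i x) y (at 0)"
    unfolding limitin_sn[OF sn]
  proof (intro ballI allI impI)
    fix p and r :: real assume pP: "p \<in> P" and r: "r > 0"
    define K where "K = Cp p"
    have K: "K \<ge> 0" unfolding K_def using Cp pP by simp
    have sp: "seminorm p" using sn pP by simp
    have "r / 3 > 0" using r by simp
    then have "eventually (\<lambda>n. p (u n - y) < r / 3) sequentially" using yl pP by blast
    moreover have "eventually (\<lambda>n. K * \<bar>hs n\<bar> powr a < r / 3) sequentially"
      by (rule order_tendstoD(2)[OF s0]) (use r in simp)
    ultimately have "eventually (\<lambda>n. p (u n - y) < r / 3 \<and> K * \<bar>hs n\<bar> powr a < r / 3) sequentially"
      by (rule eventually_conj)
    then obtain n where n: "p (u n - y) < r / 3" "K * \<bar>hs n\<bar> powr a < r / 3"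
      unfolding eventually_sequentially by blast
    have ev1: "eventually (\<lambda>h. K * \<bar>h\<bar> powr a < r / 3) (at (0::real))"
      by (rule order_tendstoD(2)[OF powr_at0[OF a]]) (use r in simp)
    have ev2: "eventually (\<lambda>h::real. h \<noteq> 0 \<and> \<bar>h\<bar> < \<delta>) (at 0)"
      unfolding eventually_at using \<delta>(1) by (intro exI[of _ \<delta>]) (auto simp: dist_real_def)
    show "eventually (\<lambda>h. p (diff_quot g i x h - y) < r) (at 0)"
      using ev1 ev2
    proof eventually_elim
      case (elim h)
      have "p (diff_quot g i x h - y) \<le> p (diff_quot g i x h - u n) + p (u n - y)"
        by (rule sn_diff_tri[OF sp])
      also have "p (diff_quot g i x h - u n) \<le> K * (\<bar>h\<bar> powr a + \<bar>hs n\<bar> powr a)"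
        using Cp pP elim hs[of n] unfolding u_def K_def by simp
      finally show ?case using elim n by (simp add: algebra_simps)
    qed
  qed
  then show ?thesis unfolding has_partial_at_def by (rule exI)
qed



lemma norm_facts:
  fixes h :: "real^'m \<Rightarrow> real"
  assumes ck: "Ck {abs} k \<Omega> h"
  shows "\<And>x. x \<in> \<Omega> \<Longrightarrow> \<bar>h x\<bar> \<le> Ck_norm {abs} abs k \<Omega> h"
    and "\<And>is s t. length is \<le> intpart k \<Longrightarrow> s \<in> \<Omega> \<Longrightarrow> t \<in> \<Omega> \<Longrightarrow> s \<noteq> t \<Longrightarrow>
      \<bar>iter_partial {abs} is h s - iter_partial {abs} is h t\<bar> / dist s t powr fracpart k
        \<le> Ck_norm {abs} abs k \<Omega> h"
proof -
  define n where "n = intpart k"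
  define A where "A = supnn ((\<lambda>x. \<bar>h x\<bar>) ` \<Omega>)"
  define HS where "HS = {hoelder_semi abs (fracpart k) \<Omega> (iter_partial {abs} is h) | is. length is \<le> n}"
  have CN: "Ck_norm {abs} abs k \<Omega> h = supnn (insert A HS)"
    unfolding Ck_norm_def A_def HS_def n_def by simp
  have "HS = (\<lambda>is. hoelder_semi abs (fracpart k) \<Omega> (iter_partial {abs} is h)) ` {is. set is \<subseteq> UNIV \<and> length is \<le> n}"
    unfolding HS_def by auto
  moreover have "finite {is :: 'm list. set is \<subseteq> UNIV \<and> length is \<le> n}"
    by (rule finite_lists_length_le) simp
  ultimately have "finite (insert A HS)" by simp
  then have bddO: "bdd_above (insert A HS)" by (rule bdd_above_finite)
  have AC: "A \<le> Ck_norm {abs} abs k \<Omega> h" unfolding CN by (rule supnn_ge[OF bddO]) simp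
  obtain B where B: "\<forall>x\<in>\<Omega>. \<bar>h x\<bar> \<le> B" using ck unfolding Ck_def by auto
  have bddA: "bdd_above ((\<lambda>x. \<bar>h x\<bar>) ` \<Omega>)" using B by (auto intro: bdd_aboveI2)
  show "\<bar>h x\<bar> \<le> Ck_norm {abs} abs k \<Omega> h" if "x \<in> \<Omega>" for x
  proof -
    have "\<bar>h x\<bar> \<le> A" unfolding A_def by (rule supnn_ge[OF bddA]) (use that in simp)
    then show ?thesis using AC by simp
  qed
  show "\<bar>iter_partial {abs} is h s - iter_partial {abs} is h t\<bar> / dist s t powr fracpart k
        \<le> Ck_norm {abs} abs k \<Omega> h"
    if len: "length is \<le> intpart k" and st: "s \<in> \<Omega>" "t \<in> \<Omega>" "s \<noteq> t" for "is" s t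
  proof -
    obtain B where B: "\<forall>s\<in>\<Omega>. \<forall>t\<in>\<Omega>. s \<noteq> t \<longrightarrow>
        \<bar>iter_partial {abs} is h s - iter_partial {abs} is h t\<bar> / dist s t powr fracpart k \<le> B"
      using ck len unfolding Ck_def by auto
    define S where "S = {\<bar>iter_partial {abs} is h s - iter_partial {abs} is h t\<bar> / dist s t powr fracpart k |s t.
        s \<in> \<Omega> \<and> t \<in> \<Omega> \<and> s \<noteq> t}"
    have bddS: "bdd_above S"
    proof (rule bdd_aboveI)
      fix z assume "z \<in> S"
      then show "z \<le> B" unfolding S_def using B by auto
    qed
    have "\<bar>iter_partial {abs} is h s - iter_partial {abs} is h t\<bar> / dist s t powr fracpart k
        \<le> supnn S" by (rule supnn_ge[OF bddS]) (use st in \<open>auto simp: S_def\<close>)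
    also have "supnn S = hoelder_semi abs (fracpart k) \<Omega> (iter_partial {abs} is h)"
      unfolding S_def hoelder_semi_def ..
    also have "\<dots> \<le> Ck_norm {abs} abs k \<Omega> h" unfolding CN
      by (rule supnn_ge[OF bddO]) (use len in \<open>auto simp: HS_def n_def\<close>)
    finally show ?thesis .
  qed
qed

lemma ereal_bound:
  assumes "ereal N \<le> ereal C * D" "C > 0" "D \<le> 1" "0 \<le> D"
  shows "N \<le> C"
proof -
  have "ereal C * D \<le> ereal C * 1" by (rule ereal_mult_left_mono) (use assms in auto)
  then have "ereal C * D \<le> ereal C" by simp
  then have "ereal N \<le> ereal C" using assms(1) by (rule order_trans[rotated])
  then show ?thesis by simp
qed

lemma fracpart_pos:
  assumes "k > 0" "k \<notin> \<nat>"
  shows "fracpart k > 0"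
proof (rule ccontr)
  assume "\<not> fracpart k > 0"
  moreover have "fracpart k \<ge> 0" unfolding fracpart_def by simp
  ultimately have "k = of_int \<lfloor>k\<rfloor>" unfolding fracpart_def by linarith
  moreover have "\<lfloor>k\<rfloor> \<ge> 0" using assms(1) by simp
  ultimately have "k = real (nat \<lfloor>k\<rfloor>)" by simp
  then have "k \<in> \<nat>" by (metis of_nat_in_Nats)
  then show False using assms(2) by simp
qed



lemma backward:
  fixes P :: "('v::real_vector \<Rightarrow> real) set"
    and \<Omega> :: "(real^'m) set" and k :: real and f :: "real^'m \<Rightarrow> 'v"
  assumes sn: "\<forall>p\<in>P. seminorm p" and haus: "Hausdorff_space (seminorm_topology P)"
    and sc: "seq_complete P" and op: "open \<Omega>" and k0: "k > 0" and kN: "k \<notin> \<nat>"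
    and H: "\<forall>p\<in>P. \<exists>C>0. \<forall>l. cont_linear_form P l \<longrightarrow>
        Ck {abs} k \<Omega> (l \<circ> f) \<and>
        ereal (Ck_norm {abs} abs k \<Omega> (l \<circ> f)) \<le> ereal C * dual_seminorm p l"
  shows "Ck P k \<Omega> f"
proof -
  define n where "n = intpart k"
  define a where "a = fracpart k"
  have a: "a > 0" unfolding a_def by (rule fracpart_pos[OF k0 kN])
  from bchoice[OF H] obtain Cf where Cf: "\<forall>p\<in>P. Cf p > 0 \<and> (\<forall>l. cont_linear_form P l \<longrightarrow>
        Ck {abs} k \<Omega> (l \<circ> f) \<and>
        ereal (Ck_norm {abs} abs k \<Omega> (l \<circ> f)) \<le> ereal (Cf p) * dual_seminorm p l)"
    by (elim exE)
  have KB: "Ck {abs} k \<Omega> (l \<circ> f) \<and> Ck_norm {abs} abs k \<Omega> (l \<circ> f) \<le> Cf p"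
    if pP: "p \<in> P" and cl: "cont_linear_form P l" and d1: "dual_seminorm p l \<le> 1" for p l
  proof -
    have lin: "linear l" using cl unfolding cont_linear_form_def by simp
    have c1: "Ck {abs} k \<Omega> (l \<circ> f)" and c2: "ereal (Ck_norm {abs} abs k \<Omega> (l \<circ> f)) \<le> ereal (Cf p) * dual_seminorm p l"
      and c3: "Cf p > 0"
      using Cf pP cl by auto
    have "Ck_norm {abs} abs k \<Omega> (l \<circ> f) \<le> Cf p"
      by (rule ereal_bound[OF c2 c3 d1 dual_nonneg]) (use sn pP lin in auto)
    then show ?thesis using c1 by simp
  qed
  have CfP: "Cf p > 0" if "p \<in> P" for p using Cf that by auto
  have bnd: "\<forall>p\<in>P. \<exists>B. \<forall>x\<in>\<Omega>. p (f x) \<le> B"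
  proof
    fix p assume pP: "p \<in> P"
    have "p (f x) \<le> Cf p" if x: "x \<in> \<Omega>" for x
    proof -
      obtain l where l: "cont_linear_form P l" "dual_seminorm p l \<le> 1" "l (f x) = p (f x)"
        using hb_cont[OF sn pP, of "f x"] by blast
      have kb: "Ck {abs} k \<Omega> (l \<circ> f)" "Ck_norm {abs} abs k \<Omega> (l \<circ> f) \<le> Cf p"
        using KB[OF pP l(1,2)] by auto
      have "\<bar>(l \<circ> f) x\<bar> \<le> Ck_norm {abs} abs k \<Omega> (l \<circ> f)" by (rule norm_facts(1)[OF kb(1) x])
      then show ?thesis using l(3) kb(2) by simp
    qed
    then show "\<exists>B. \<forall>x\<in>\<Omega>. p (f x) \<le> B" by blast
  qed
  have pe: "length is \<le> n \<Longrightarrow> partials_exist P \<Omega> is f" for "is"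
  proof (induction "is")
    case Nil
    then show ?case by simp
  next
    case (Cons i "is")
    then have pe0: "partials_exist P \<Omega> is f" by simp
    have len: "length (i # is) \<le> intpart k" using Cons.prems unfolding n_def .
    define g where "g = iter_partial P is f"
    define D where "D = (\<lambda>l y. partial {abs} i (iter_partial {abs} is (l \<circ> f)) y)"
    have "has_partial_at P g i x" if x: "x \<in> \<Omega>" for x
    proof (rule weak_to_strong[OF sn sc op x a, where D=D and g=g])
      fix p assume pP: "p \<in> P"
      have "\<forall>l. cont_linear_form P l \<and> dual_seminorm p l \<le> 1 \<longrightarrow>
        (\<forall>y\<in>\<Omega>. ((\<lambda>h. diff_quot (l \<circ> g) i y h) \<longlongrightarrow> D l y) (at 0)) \<and>
        (\<forall>s\<in>\<Omega>. \<forall>t\<in>\<Omega>. \<bar>D l s - D l t\<bar> \<le> Cf p * dist s t powr a)"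
      proof (intro allI impI)
        fix l assume "cont_linear_form P l \<and> dual_seminorm p l \<le> 1"
        then have cl: "cont_linear_form P l" and d1: "dual_seminorm p l \<le> 1" by auto
        have kb: "Ck {abs} k \<Omega> (l \<circ> f)" "Ck_norm {abs} abs k \<Omega> (l \<circ> f) \<le> Cf p"
          using KB[OF pP cl d1] by auto
        define G where "G = iter_partial {abs} is (l \<circ> f)"
        have trr: "partials_exist {abs} \<Omega> is (l \<circ> f) \<and>
            (\<forall>x\<in>\<Omega>. iter_partial {abs} is (l \<circ> f) x = l (iter_partial P is f x))"
          by (rule partials_transfer[OF sn haus op cl pe0])
        have tr: "\<And>y. y \<in> \<Omega> \<Longrightarrow> (l \<circ> g) y = G y"
          using trr unfolding G_def g_def by simp
        have peA: "partials_exist {abs} \<Omega> (i # is) (l \<circ> f)"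
          using kb(1) len unfolding Ck_def by blast
        then have hpA: "\<forall>y\<in>\<Omega>. has_partial_at {abs} G i y" unfolding G_def by simp
        have part1: "((\<lambda>h. diff_quot (l \<circ> g) i y h) \<longlongrightarrow> D l y) (at 0)" if y: "y \<in> \<Omega>" for y
        proof -
          obtain z where z: "limitin (seminorm_topology {abs}) (diff_quot G i y) z (at 0)"
            using hpA y unfolding has_partial_at_def by blast
          then have z': "limitin euclideanreal (diff_quot G i y) z (at 0)" unfolding sn_abs_topology .
          have Dz: "D l y = z" unfolding D_def G_def[symmetric] partial_def sn_abs_topology
            by (rule the_limit[OF _ z']) simp
          have ev: "eventually (\<lambda>h. diff_quot (l \<circ> g) i y h = diff_quot G i y h) (at (0::real))"
            by (rule dq_local[OF op y tr])
          have "(diff_quot G i y \<longlongrightarrow> z) (at 0)" using z' by simp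
          then have "((\<lambda>h. diff_quot (l \<circ> g) i y h) \<longlongrightarrow> z) (at 0)"
            using tendsto_cong[OF ev] by simp
          then show ?thesis using Dz by simp
        qed
        have part2: "\<bar>D l s - D l t\<bar> \<le> Cf p * dist s t powr a" if st: "s \<in> \<Omega>" "t \<in> \<Omega>" for s t
        proof (cases "s = t")
          case True then show ?thesis by simp
        next
          case False
          have "\<bar>iter_partial {abs} (i # is) (l \<circ> f) s - iter_partial {abs} (i # is) (l \<circ> f) t\<bar> / dist s t powr a
              \<le> Ck_norm {abs} abs k \<Omega> (l \<circ> f)"
            unfolding a_def by (rule norm_facts(2)[OF kb(1) len st False])
          also have "\<dots> \<le> Cf p" by (rule kb(2))
          finally have "\<bar>D l s - D l t\<bar> / dist s t powr a \<le> Cf p" unfolding D_def by simp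
          moreover have "dist s t powr a > 0" using False by simp
          ultimately show ?thesis by (simp add: divide_le_eq)
        qed
        show "(\<forall>y\<in>\<Omega>. ((\<lambda>h. diff_quot (l \<circ> g) i y h) \<longlongrightarrow> D l y) (at 0)) \<and>
          (\<forall>s\<in>\<Omega>. \<forall>t\<in>\<Omega>. \<bar>D l s - D l t\<bar> \<le> Cf p * dist s t powr a)"
          using part1 part2 by blast
      qed
      moreover have "Cf p \<ge> 0" using CfP[OF pP] by simp
      ultimately show "\<exists>C\<ge>0. \<forall>l. cont_linear_form P l \<and> dual_seminorm p l \<le> 1 \<longrightarrow>
        (\<forall>y\<in>\<Omega>. ((\<lambda>h. diff_quot (l \<circ> g) i y h) \<longlongrightarrow> D l y) (at 0)) \<and>
        (\<forall>s\<in>\<Omega>. \<forall>t\<in>\<Omega>. \<bar>D l s - D l t\<bar> \<le> C * dist s t powr a)" by blast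
    qed
    then show ?case using pe0 unfolding g_def by simp
  qed
  have hol: "\<exists>B. \<forall>s\<in>\<Omega>. \<forall>t\<in>\<Omega>. s \<noteq> t \<longrightarrow>
            q (iter_partial P is f s - iter_partial P is f t) / dist s t powr a \<le> B"
    if len: "length is \<le> n" and qP: "q \<in> P" for "is" q
  proof -
    define g where "g = iter_partial P is f"
    have "q (g s - g t) / dist s t powr a \<le> Cf q" if st: "s \<in> \<Omega>" "t \<in> \<Omega>" "s \<noteq> t" for s t
    proof -
      obtain l where l: "cont_linear_form P l" "dual_seminorm q l \<le> 1" "l (g s - g t) = q (g s - g t)"
        using hb_cont[OF sn qP, of "g s - g t"] by blast
      have lin: "linear l" using l(1) unfolding cont_linear_form_def by simp
      have kb: "Ck {abs} k \<Omega> (l \<circ> f)" "Ck_norm {abs} abs k \<Omega> (l \<circ> f) \<le> Cf q"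
        using KB[OF qP l(1,2)] by auto
      have trr: "partials_exist {abs} \<Omega> is (l \<circ> f) \<and>
            (\<forall>x\<in>\<Omega>. iter_partial {abs} is (l \<circ> f) x = l (iter_partial P is f x))"
        by (rule partials_transfer[OF sn haus op l(1) pe[OF len]])
      have eq: "iter_partial {abs} is (l \<circ> f) s - iter_partial {abs} is (l \<circ> f) t = q (g s - g t)"
        using trr st l(3) linear_diff[OF lin] unfolding g_def by simp
      have "\<bar>iter_partial {abs} is (l \<circ> f) s - iter_partial {abs} is (l \<circ> f) t\<bar> / dist s t powr a
          \<le> Ck_norm {abs} abs k \<Omega> (l \<circ> f)"
        unfolding a_def by (rule norm_facts(2)[OF kb(1) len[unfolded n_def] st])
      also have "\<dots> \<le> Cf q" by (rule kb(2))
      finally have "\<bar>q (g s - g t)\<bar> / dist s t powr a \<le> Cf q" unfolding eq .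
      moreover have "q (g s - g t) / dist s t powr a \<le> \<bar>q (g s - g t)\<bar> / dist s t powr a"
        by (intro divide_right_mono) auto
      ultimately show ?thesis by simp
    qed
    then show ?thesis unfolding g_def by blast
  qed
  show ?thesis unfolding Ck_def using bnd pe hol unfolding n_def a_def by blast
qed

theorem lemma2p1:
  fixes P :: "('v::real_vector \<Rightarrow> real) set"
    and \<Omega> :: "(real^'m) set" and k :: real and f :: "real^'m \<Rightarrow> 'v"
  assumes "\<forall>p\<in>P. seminorm p"
    and "Hausdorff_space (seminorm_topology P)"
    and "seq_complete P"
    and "open \<Omega>"
    and "k > 0" and "k \<notin> \<nat>"
  shows "Ck P k \<Omega> f \<longleftrightarrow>
    (\<forall>p\<in>P. \<exists>C>0. \<forall>l. cont_linear_form P l \<longrightarrow>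
        Ck {abs} k \<Omega> (l \<circ> f) \<and>
        ereal (Ck_norm {abs} abs k \<Omega> (l \<circ> f)) \<le> ereal C * dual_seminorm p l)"
proof
  assume "Ck P k \<Omega> f"
  then show "\<forall>p\<in>P. \<exists>C>0. \<forall>l. cont_linear_form P l \<longrightarrow>
        Ck {abs} k \<Omega> (l \<circ> f) \<and>
        ereal (Ck_norm {abs} abs k \<Omega> (l \<circ> f)) \<le> ereal C * dual_seminorm p l"
    using forward[OF assms(1,2,4)] by blast
next
  assume "\<forall>p\<in>P. \<exists>C>0. \<forall>l. cont_linear_form P l \<longrightarrow>
        Ck {abs} k \<Omega> (l \<circ> f) \<and>
        ereal (Ck_norm {abs} abs k \<Omega> (l \<circ> f)) \<le> ereal C * dual_seminorm p l"
  then show "Ck P k \<Omega> f" by (rule backward[OF assms])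
qed


end
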